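(* Let the setting, algorithm and notation be as described in the context, suppose the constraint qualification holds and the optimization problem has a nonempty solution set. Assume $\tau\in(0,(1+\sqrt5)/2)$ and that for some $\alpha\in(\tau/\min(1+\tau,1+\tau^{-1}),1]$, \[ \widehat\Sigma_f+S\succeq0,\quad H_f\succ0,\quad \tfrac12\widehat\Sigma_g+T\succeq0,\quad M_g\succ0 . \] Then, as $k\to\infty$, \[ \min_{1\le i\le k}\Big\{d^2\big(0,\partial p(x^{i+1})+\nabla f(x^{i+1})+Az^{i+1}\big)+d^2\big(0,\partial q(y^{i+1})+\nabla g(y^{i+1})+Bz^{i+1}\big)+\|A^*x^{i+1}+B^*y^{i+1}-c\|^2\Big\}=o(1/k) \] and \[ \min_{1\le i\le k}\Big|\big(p(x^i)+f(x^i)+q(y^i)+g(y^i)\big)-\big(p(\bar x)+f(\bar x)+q(\bar y)+g(\bar y)\big)\Big|=o(1/\sqrt k), \] where $(\bar x,\bar y,\bar z)$ is any KKT point, i.e. satisfies $0\in\partial p(\bar x)+\nabla f(\bar x)+A\bar z$, $0\in\partial q(\bar y)+\nabla g(\bar y)+B\bar z$, $A^*\bar x+B^*\bar y=c$.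
   Context: Let $\mathcal X,\mathcal Y,\mathcal Z$ be finite-dimensional real Euclidean spaces with inner products $\langle\cdot,\cdot\rangle$ and induced norms $\|\cdot\|$; $d(w,C)$ denotes the Euclidean distance from a point $w$ to a set $C$. Let $p:\mathcal X\to(-\infty,+\infty]$ and $q:\mathcal Y\to(-\infty,+\infty]$ be closed proper convex functions, and let $f:\mathcal X\to\mathbb R$, $g:\mathcal Y\to\mathbb R$ be convex differentiable functions with Lipschitz continuous gradients. Let $A:\mathcal Z\to\mathcal X$, $B:\mathcal Z\to\mathcal Y$ be linear maps with adjoints $A^*,B^*$, and $c\in\mathcal Z$. The optimization problem is $\min_{x,y}\{p(x)+f(x)+q(y)+g(y): A^*x+B^*y=c\}$. Constraint qualification: there is $(x_0,y_0)\in\mathrm{ri}(\mathrm{dom}(p)\times\mathrm{dom}(q))$ with $A^*x_0+B^*y_0=c$. Let $\Sigma_f,\widehat\Sigma_f$ (on $\mathcal X$) and $\Sigma_g,\widehat\Sigma_g$ (on $\mathcal Y$) be self-adjoint positive semidefinite linear operators with $\widehat\Sigma_f\succeq\Sigma_f$, $\widehat\Sigma_g\succeq\Sigma_g$, such that for all $x,x'\in\mathcal X$, $y,y'\in\mathcal Y$: $f(x')+\langle x-x',\nabla f(x')\rangle+\frac12\|x-x'\|^2_{\Sigma_f}\le f(x)\le f(x')+\langle x-x',\nabla f(x')\rangle+\frac12\|x-x'\|^2_{\widehat\Sigma_f}$ and the analogous two inequalities for $g$ with $\Sigma_g,\widehat\Sigma_g$. For a self-adjoint (possibly indefinite) operator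 $G$, $\|u\|_G^2:=\langle u,Gu\rangle$. Algorithm (Majorized iPADMM): let $\sigma>0$, $\tau>0$, and let $S:\mathcal X\to\mathcal X$, $T:\mathcal Y\to\mathcal Y$ be self-adjoint, possibly indefinite, linear operators with $\widehat\Sigma_f+S+\sigma AA^*\succeq0$ and $\widehat\Sigma_g+T+\sigma BB^*\succeq0$. Starting from $(x^0,y^0,z^0)\in\mathrm{dom}(p)\times\mathrm{dom}(q)\times\mathcal Z$, for $k=0,1,\dots$: $x^{k+1}\in\arg\min_{x}\{p(x)+\langle\nabla f(x^k),x\rangle+\frac12\|x-x^k\|^2_{\widehat\Sigma_f+S}+\langle z^k,A^*x\rangle+\frac\sigma2\|A^*x+B^*y^k-c\|^2\}$, $y^{k+1}\in\arg\min_{y}\{q(y)+\langle\nabla g(y^k),y\rangle+\frac12\|y-y^k\|^2_{\widehat\Sigma_g+T}+\langle z^k,B^*y\rangle+\frac\sigma2\|A^*x^{k+1}+B^*y-c\|^2\}$, $z^{k+1}=z^k+\tau\sigma(A^*x^{k+1}+B^*y^{k+1}-c)$ (the minimizers are assumed to exist). Notation: for $\alpha\in(0,1]$, $H_f:=\frac12\Sigma_f+S+\frac12(1-\alpha)\sigma AA^*$ and $M_g:=\frac12\Sigma_g+T+\min(\tau,1+\tau-\tau^2)\alpha\sigma BB^*$. *)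

theory Defs
  imports "HOL-Analysis.Analysis" "HOL-Library.Landau_Symbols"
begin

definition edom :: "('a \<Rightarrow> ereal) \<Rightarrow> 'a set" where
  "edom h = {x. h x < \<infinity>}"

definition proper_fun :: "('a \<Rightarrow> ereal) \<Rightarrow> bool" where
  "proper_fun h \<longleftrightarrow> (\<forall>x. h x \<noteq> -\<infinity>) \<and> edom h \<noteq> {}"

definition eepigraph :: "('a \<Rightarrow> ereal) \<Rightarrow> ('a \<times> real) set" where
  "eepigraph h = {(x, r). h x \<le> ereal r}"

definition convex_efun :: "('a::real_vector \<Rightarrow> ereal) \<Rightarrow> bool" where
  "convex_efun h \<longleftrightarrow> convex (eepigraph h)"

definition closed_efun :: "('a::topological_space \<Rightarrow> ereal) \<Rightarrow> bool" where
  "closed_efun h \<longleftrightarrow> closed (eepigraph h)"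

definition closed_proper_convex :: "('a::real_normed_vector \<Rightarrow> ereal) \<Rightarrow> bool" where
  "closed_proper_convex h \<longleftrightarrow> closed_efun h \<and> proper_fun h \<and> convex_efun h"

definition subdiff :: "('a::real_inner \<Rightarrow> ereal) \<Rightarrow> 'a \<Rightarrow> 'a set" where
  "subdiff h x = {v. h x < \<infinity> \<and> (\<forall>u. h x + ereal (v \<bullet> (u - x)) \<le> h u)}"

definition self_adjoint :: "('a::real_inner \<Rightarrow> 'a) \<Rightarrow> bool" where
  "self_adjoint G \<longleftrightarrow> linear G \<and> (\<forall>u v. G u \<bullet> v = u \<bullet> G v)"

definition qf :: "('a::real_inner \<Rightarrow> 'a) \<Rightarrow> 'a \<Rightarrow> real" where
  "qf G u = u \<bullet> G u"

definition psd :: "('a::real_inner \<Rightarrow> 'a) \<Rightarrow> bool" where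
  "psd G \<longleftrightarrow> (\<forall>u. 0 \<le> qf G u)"

definition pd :: "('a::real_inner \<Rightarrow> 'a) \<Rightarrow> bool" where
  "pd G \<longleftrightarrow> (\<forall>u. u \<noteq> 0 \<longrightarrow> 0 < qf G u)"

end

theory Submission
  imports Defs
begin

lemma sa_lin: "self_adjoint G \<Longrightarrow> linear G" by (simp add: self_adjoint_def)

lemma qf_add: assumes "self_adjoint G" shows "qf G (a + b) = qf G a + 2 * (G a \<bullet> b) + qf G b"
proof -
  have l: "linear G" and s: "\<And>u v. G u \<bullet> v = u \<bullet> G v" using assms by (auto simp: self_adjoint_def)
  have "qf G (a+b) = a \<bullet> G a + a \<bullet> G b + b \<bullet> G a + b \<bullet> G b"
    by (simp add: qf_def linear_add[OF l] inner_add_left inner_add_right)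
  moreover have "a \<bullet> G b = G a \<bullet> b" using s[of a b] by simp
  moreover have "b \<bullet> G a = G a \<bullet> b" by (simp add: inner_commute)
  ultimately show ?thesis by (simp add: qf_def)
qed

lemma qf_scale: assumes "linear G" shows "qf G (c *\<^sub>R a) = c\<^sup>2 * qf G a"
  by (simp add: qf_def linear_scale[OF assms] power2_eq_square)

lemma qf_neg: assumes "linear G" shows "qf G (- a) = qf G a"
  using qf_scale[OF assms, of "-1" a] by simp

lemma qf_diff: assumes "self_adjoint G" shows "qf G (a - b) = qf G a - 2 * (G a \<bullet> b) + qf G b"
  using qf_add[OF assms, of a "-b"] qf_neg[OF sa_lin[OF assms], of b] by (simp add: inner_minus_right)

lemma psd_par: assumes "self_adjoint G" "psd G" shows "qf G a + qf G b \<ge> qf G (a - b) / 2"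
proof -
  have "qf G (a + b) \<ge> 0" using assms(2) by (simp add: psd_def)
  thus ?thesis using qf_add[OF assms(1), of a b] qf_diff[OF assms(1), of a b] by simp
qed

lemma adj_l: fixes A :: "'a::euclidean_space \<Rightarrow> 'b::euclidean_space" shows "linear A \<Longrightarrow> A w \<bullet> u = w \<bullet> adjoint A u"
  using adjoint_works[of A w u] by simp
lemma adj_r: fixes A :: "'a::euclidean_space \<Rightarrow> 'b::euclidean_space" shows "linear A \<Longrightarrow> u \<bullet> A w = adjoint A u \<bullet> w"
  using adjoint_works[of A w u] by (simp add: inner_commute)

lemma efun_convex_ineq:
  assumes cv: "convex_efun h" and ha: "h a \<le> ereal ra" and hb: "h b \<le> ereal rb"
    and t: "0 \<le> t" "t \<le> 1"
  shows "h ((1-t) *\<^sub>R a + t *\<^sub>R b) \<le> ereal ((1-t)*ra + t*rb)"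
proof -
  have "(a, ra) \<in> eepigraph h" "(b, rb) \<in> eepigraph h" using ha hb by (auto simp: eepigraph_def)
  hence "(1-t) *\<^sub>R (a, ra) + t *\<^sub>R (b, rb) \<in> eepigraph h"
    using convexD[OF cv[unfolded convex_efun_def], of "(a,ra)" "(b,rb)" "1-t" t] t by simp
  thus ?thesis by (simp add: eepigraph_def)
qed

lemma small_theta:
  fixes X C :: real
  assumes h: "\<And>t. 0 < t \<Longrightarrow> t \<le> 1 \<Longrightarrow> 0 \<le> X + t * C"
  shows "0 \<le> X"
proof (rule ccontr)
  assume "\<not> 0 \<le> X" hence X: "X < 0" by simp
  define t where "t = min 1 (-X / (2*\<bar>C\<bar>+1))"
  have d: "2*\<bar>C\<bar>+1 > 0" by simp
  have t0: "0 < t" using X d unfolding t_def by (simp add: divide_neg_pos)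
  have t1: "t \<le> 1" unfolding t_def by simp
  have t2: "t \<le> -X / (2*\<bar>C\<bar>+1)" unfolding t_def by simp
  have "t * C \<le> t * \<bar>C\<bar>" using t0 by (simp add: mult_left_mono)
  also have "\<dots> \<le> (-X / (2*\<bar>C\<bar>+1)) * \<bar>C\<bar>" by (rule mult_right_mono[OF t2]) simp
  also have "\<dots> \<le> -X/2"
  proof -
    have "(-X / (2*\<bar>C\<bar>+1)) * \<bar>C\<bar> = -X * (\<bar>C\<bar> / (2*\<bar>C\<bar>+1))" by simp
    moreover have "\<bar>C\<bar> / (2*\<bar>C\<bar>+1) \<le> 1/2" using d by (simp add: divide_simps)
    moreover have "-X * (\<bar>C\<bar> / (2*\<bar>C\<bar>+1)) \<le> -X * (1/2)"
      by (rule mult_left_mono) (use calculation(2) X in auto)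
    ultimately show ?thesis by simp
  qed
  finally have "X + t*C < 0" using X by linarith
  thus False using h[OF t0 t1] by linarith
qed

lemma sub_of_min:
  fixes h :: "'a::real_inner \<Rightarrow> real"
  assumes cv: "convex_efun p" and nm: "\<And>u. p u \<noteq> -\<infinity>" and fin: "p xm < \<infinity>"
    and mn: "\<And>u. p xm + ereal (h xm) \<le> p u + ereal (h u)"
    and up: "\<And>t d. 0 < t \<Longrightarrow> t \<le> 1 \<Longrightarrow> h (xm + t *\<^sub>R d) \<le> h xm + t * (gv \<bullet> d) + t\<^sup>2 * C d"
  shows "(- gv) \<in> subdiff p xm"
proof -
  obtain pm where pm: "p xm = ereal pm" using fin nm[of xm] by (cases "p xm") auto
  have "p xm + ereal (- gv \<bullet> (u - xm)) \<le> p u" for u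
  proof (cases "p u = \<infinity>")
    case True thus ?thesis by (simp only: True pm plus_ereal.simps ereal_less_eq(1))
  next
    case False
    then obtain pu where pu: "p u = ereal pu" using nm[of u] by (cases "p u") auto
    define d where "d = u - xm"
    have key: "0 \<le> (pu - pm + gv \<bullet> d) + t * C d" if t: "0 < t" "t \<le> 1" for t
    proof -
      have eq: "xm + t *\<^sub>R d = (1-t) *\<^sub>R xm + t *\<^sub>R u" by (simp add: d_def algebra_simps)
      have c1: "p (xm + t *\<^sub>R d) \<le> ereal ((1-t)*pm + t*pu)"
        unfolding eq by (rule efun_convex_ineq[OF cv]) (use pm pu t in auto)
      have "ereal (pm + h xm) = p xm + ereal (h xm)" by (simp only: pm plus_ereal.simps)
      also have "\<dots> \<le> p (xm + t *\<^sub>R d) + ereal (h (xm + t *\<^sub>R d))"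
        by (rule mn)
      also have "\<dots> \<le> ereal ((1-t)*pm + t*pu) + ereal (h (xm + t *\<^sub>R d))"
        using c1 by (rule add_right_mono)
      also have "\<dots> = ereal ((1-t)*pm + t*pu + h (xm + t *\<^sub>R d))" by (simp only: plus_ereal.simps)
      finally have A: "pm + h xm \<le> (1-t)*pm + t*pu + h (xm + t *\<^sub>R d)" by (simp only: ereal_less_eq(3))
      have B: "h (xm + t *\<^sub>R d) \<le> h xm + t * (gv \<bullet> d) + t\<^sup>2 * C d" by (rule up[OF t])
      have "0 \<le> t * (pu - pm + gv \<bullet> d) + t\<^sup>2 * C d"
      proof -
        have "t * (pu - pm + gv \<bullet> d) + t\<^sup>2 * C d = ((1-t)*pm + t*pu + (h xm + t * (gv \<bullet> d) + t\<^sup>2 * C d)) - (pm + h xm)"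
          by (simp add: algebra_simps)
        thus ?thesis using A B by linarith
      qed
      also have "t * (pu - pm + gv \<bullet> d) + t\<^sup>2 * C d = t * ((pu - pm + gv \<bullet> d) + t * C d)"
        by (simp add: algebra_simps power2_eq_square)
      finally show ?thesis using t by (simp add: zero_le_mult_iff)
    qed
    have X: "0 \<le> pu - pm + gv \<bullet> d" by (rule small_theta[OF key])
    have "p xm + ereal (- gv \<bullet> (u - xm)) = ereal (pm - gv \<bullet> d)"
      by (simp only: pm plus_ereal.simps d_def inner_minus_left diff_conv_add_uminus)
    also have "\<dots> \<le> ereal pu" using X by simp
    finally show ?thesis using pu by simp
  qed
  thus ?thesis using fin by (simp add: subdiff_def)
qed

lemma sa_add: "self_adjoint G \<Longrightarrow> self_adjoint K \<Longrightarrow> self_adjoint (\<lambda>u. G u + K u)"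
  unfolding self_adjoint_def by (auto simp: linear_compose_add inner_add_left inner_add_right)

lemma normsq_add: "(norm (u + v))\<^sup>2 = (norm u)\<^sup>2 + 2 * (u \<bullet> v) + (norm (v::'a::real_inner))\<^sup>2"
  unfolding power2_norm_eq_inner by (simp add: inner_add_left inner_add_right inner_commute)

lemma normsq_diff: "(norm (u - v))\<^sup>2 = (norm u)\<^sup>2 - 2 * (u \<bullet> v) + (norm (v::'a::real_inner))\<^sup>2"
  unfolding power2_norm_eq_inner by (simp add: inner_diff_left inner_diff_right inner_commute)

lemma quad_expand:
  fixes G :: "'a::euclidean_space \<Rightarrow> 'a" and A :: "'b::euclidean_space \<Rightarrow> 'a"
  assumes G: "self_adjoint G" and A: "linear A"
    and h: "\<And>u. h u = g \<bullet> u + qf G (u - a) / 2 + z \<bullet> adjoint A u + \<sigma> / 2 * (norm (adjoint A u + e))\<^sup>2"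
  shows "h (xm + t *\<^sub>R d) = h xm + t * ((g + G (xm - a) + A z + \<sigma> *\<^sub>R A (adjoint A xm + e)) \<bullet> d)
           + t\<^sup>2 * ((qf G d + \<sigma> * (norm (adjoint A d))\<^sup>2)/2)"
proof -
  have lA: "linear (adjoint A)" by (rule adjoint_linear[OF A])
  have q1: "qf G (xm + t *\<^sub>R d - a) = qf G (xm - a) + 2 * t * (G (xm - a) \<bullet> d) + t\<^sup>2 * qf G d"
  proof -
    have "xm + t *\<^sub>R d - a = (xm - a) + t *\<^sub>R d" by simp
    hence "qf G (xm + t *\<^sub>R d - a) = qf G ((xm - a) + t *\<^sub>R d)" by (simp only:)
    thus ?thesis using qf_add[OF G, of "xm - a" "t *\<^sub>R d"] qf_scale[OF sa_lin[OF G], of t d] by simp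
  qed
  have n1: "(norm (adjoint A (xm + t *\<^sub>R d) + e))\<^sup>2 = (norm (adjoint A xm + e))\<^sup>2
      + 2 * t * ((adjoint A xm + e) \<bullet> adjoint A d) + t\<^sup>2 * (norm (adjoint A d))\<^sup>2"
  proof -
    have eq: "adjoint A (xm + t *\<^sub>R d) + e = (adjoint A xm + e) + t *\<^sub>R adjoint A d"
      by (simp add: linear_add[OF lA] linear_scale[OF lA])
    have "(norm (adjoint A (xm + t *\<^sub>R d) + e))\<^sup>2 = (norm (adjoint A xm + e))\<^sup>2
      + 2 * ((adjoint A xm + e) \<bullet> (t *\<^sub>R adjoint A d)) + (norm (t *\<^sub>R adjoint A d))\<^sup>2"
      unfolding eq by (rule normsq_add)
    also have "\<dots> = (norm (adjoint A xm + e))\<^sup>2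
      + 2 * t * ((adjoint A xm + e) \<bullet> adjoint A d) + t\<^sup>2 * (norm (adjoint A d))\<^sup>2"
      by (simp add: power_mult_distrib)
    finally show ?thesis .
  qed
  have z1: "z \<bullet> adjoint A (xm + t *\<^sub>R d) = z \<bullet> adjoint A xm + t * (A z \<bullet> d)"
    by (simp add: linear_add[OF lA] linear_scale[OF lA] inner_add_right adj_l[OF A])
  have g1: "(g + G (xm - a) + A z + \<sigma> *\<^sub>R A (adjoint A xm + e)) \<bullet> d
      = g \<bullet> d + G (xm - a) \<bullet> d + A z \<bullet> d + \<sigma> * ((adjoint A xm + e) \<bullet> adjoint A d)"
    by (simp add: inner_add_left adj_l[OF A])
  show ?thesis unfolding h q1 n1 z1 g1 by (simp add: algebra_simps inner_add_right add_divide_distrib)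
qed

locale admm =

  fixes p :: "'x::euclidean_space \<Rightarrow> ereal" and q :: "'y::euclidean_space \<Rightarrow> ereal"
    and f :: "'x \<Rightarrow> real" and g :: "'y \<Rightarrow> real"
    and gf :: "'x \<Rightarrow> 'x" and gg :: "'y \<Rightarrow> 'y"
    and A :: "'z::euclidean_space \<Rightarrow> 'x" and B :: "'z \<Rightarrow> 'y" and c :: 'z
    and Sf Shf S :: "'x \<Rightarrow> 'x" and Sg Shg T :: "'y \<Rightarrow> 'y"
    and \<sigma> \<tau> \<alpha> :: real
    and x :: "nat \<Rightarrow> 'x" and y :: "nat \<Rightarrow> 'y" and z :: "nat \<Rightarrow> 'z"
  assumes p: "closed_proper_convex p" and q: "closed_proper_convex q"
    and f_conv: "convex_on UNIV f" and g_conv: "convex_on UNIV g"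
    and f_grad: "\<And>u. (f has_derivative (\<lambda>h. gf u \<bullet> h)) (at u)"
    and g_grad: "\<And>u. (g has_derivative (\<lambda>h. gg u \<bullet> h)) (at u)"
    and gf_lip: "\<exists>L. L-lipschitz_on UNIV gf"
    and gg_lip: "\<exists>L. L-lipschitz_on UNIV gg"
    and A_lin: "linear A" and B_lin: "linear B"
    and CQ: "\<exists>x0 y0. (x0, y0) \<in> rel_interior (edom p \<times> edom q) \<and>
                     adjoint A x0 + adjoint B y0 = c"
    and Sf: "self_adjoint Sf" "psd Sf" and Shf: "self_adjoint Shf" "psd (\<lambda>u. Shf u - Sf u)"
    and Sg: "self_adjoint Sg" "psd Sg" and Shg: "self_adjoint Shg" "psd (\<lambda>u. Shg u - Sg u)"
    and f_maj: "\<And>u u'. f u' + (u - u') \<bullet> gf u' + qf Sf (u - u') / 2 \<le> f u"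
               "\<And>u u'. f u \<le> f u' + (u - u') \<bullet> gf u' + qf Shf (u - u') / 2"
    and g_maj: "\<And>v v'. g v' + (v - v') \<bullet> gg v' + qf Sg (v - v') / 2 \<le> g v"
               "\<And>v v'. g v \<le> g v' + (v - v') \<bullet> gg v' + qf Shg (v - v') / 2"
    and sol: "\<exists>xs ys. adjoint A xs + adjoint B ys = c \<and>
               (\<forall>u v. adjoint A u + adjoint B v = c \<longrightarrow>
                  p xs + ereal (f xs) + q ys + ereal (g ys) \<le> p u + ereal (f u) + q v + ereal (g v))"
    and \<sigma>: "\<sigma> > 0"
    and S: "self_adjoint S" and T: "self_adjoint T"
    and alg_x: "psd (\<lambda>u. Shf u + S u + \<sigma> *\<^sub>R A (adjoint A u))"
    and alg_y: "psd (\<lambda>v. Shg v + T v + \<sigma> *\<^sub>R B (adjoint B v))"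
    and init: "x 0 \<in> edom p" "y 0 \<in> edom q"
    and x_step: "\<And>k u. p (x (Suc k)) + ereal (gf (x k) \<bullet> x (Suc k)
                        + qf (\<lambda>w. Shf w + S w) (x (Suc k) - x k) / 2
                        + z k \<bullet> adjoint A (x (Suc k))
                        + \<sigma> / 2 * (norm (adjoint A (x (Suc k)) + adjoint B (y k) - c))\<^sup>2)
                   \<le> p u + ereal (gf (x k) \<bullet> u + qf (\<lambda>w. Shf w + S w) (u - x k) / 2
                        + z k \<bullet> adjoint A u
                        + \<sigma> / 2 * (norm (adjoint A u + adjoint B (y k) - c))\<^sup>2)"
    and y_step: "\<And>k v. q (y (Suc k)) + ereal (gg (y k) \<bullet> y (Suc k)
                        + qf (\<lambda>w. Shg w + T w) (y (Suc k) - y k) / 2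
                        + z k \<bullet> adjoint B (y (Suc k))
                        + \<sigma> / 2 * (norm (adjoint A (x (Suc k)) + adjoint B (y (Suc k)) - c))\<^sup>2)
                   \<le> q v + ereal (gg (y k) \<bullet> v + qf (\<lambda>w. Shg w + T w) (v - y k) / 2
                        + z k \<bullet> adjoint B v
                        + \<sigma> / 2 * (norm (adjoint A (x (Suc k)) + adjoint B v - c))\<^sup>2)"
    and z_step: "\<And>k. z (Suc k) = z k + (\<tau> * \<sigma>) *\<^sub>R
                        (adjoint A (x (Suc k)) + adjoint B (y (Suc k)) - c)"
    and \<tau>: "0 < \<tau>" "\<tau> < (1 + sqrt 5) / 2"
    and \<alpha>: "\<tau> / min (1 + \<tau>) (1 + 1 / \<tau>) < \<alpha>" "\<alpha> \<le> 1"
    and cond1: "psd (\<lambda>u. Shf u + S u)"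
    and cond2: "pd (\<lambda>u. (1/2) *\<^sub>R Sf u + S u + ((1 - \<alpha>) * \<sigma> / 2) *\<^sub>R A (adjoint A u))"
    and cond3: "psd (\<lambda>v. (1/2) *\<^sub>R Shg v + T v)"
    and cond4: "pd (\<lambda>v. (1/2) *\<^sub>R Sg v + T v
                     + (min \<tau> (1 + \<tau> - \<tau>\<^sup>2) * \<alpha> * \<sigma>) *\<^sub>R B (adjoint B v))"
begin

lemma linAt: "linear (adjoint A)" by (rule adjoint_linear[OF A_lin])
lemma linBt: "linear (adjoint B)" by (rule adjoint_linear[OF B_lin])

lemma p_cv: "convex_efun p" and p_nm: "\<And>u. p u \<noteq> -\<infinity>" and p_ex: "\<exists>u. p u < \<infinity>"
  using p unfolding closed_proper_convex_def proper_fun_def edom_def by auto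
lemma q_cv: "convex_efun q" and q_nm: "\<And>u. q u \<noteq> -\<infinity>" and q_ex: "\<exists>u. q u < \<infinity>"
  using q unfolding closed_proper_convex_def proper_fun_def edom_def by auto

lemma SG: "self_adjoint (\<lambda>w. Shf w + S w)" by (rule sa_add[OF Shf(1) S])
lemma SH: "self_adjoint (\<lambda>w. Shg w + T w)" by (rule sa_add[OF Shg(1) T])

lemma x_fin: "p (x (Suc k)) < \<infinity>"
proof (rule ccontr)
  assume "\<not> p (x (Suc k)) < \<infinity>"
  hence i: "p (x (Suc k)) = \<infinity>" by simp
  obtain u where u: "p u < \<infinity>" using p_ex by auto
  then obtain pu where "p u = ereal pu" using p_nm[of u] by (cases "p u") auto
  thus False using x_step[of k u] i by simp
qed

lemma y_fin: "q (y (Suc k)) < \<infinity>"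
proof (rule ccontr)
  assume "\<not> q (y (Suc k)) < \<infinity>"
  hence i: "q (y (Suc k)) = \<infinity>" by simp
  obtain u where u: "q u < \<infinity>" using q_ex by auto
  then obtain pu where "q u = ereal pu" using q_nm[of u] by (cases "q u") auto
  thus False using y_step[of k u] i by simp
qed

definition "vx k = - (gf (x k) + (Shf (x (Suc k) - x k) + S (x (Suc k) - x k)) + A (z k)
    + \<sigma> *\<^sub>R A (adjoint A (x (Suc k)) + (adjoint B (y k) - c)))"
definition "vy k = - (gg (y k) + (Shg (y (Suc k) - y k) + T (y (Suc k) - y k)) + B (z k)
    + \<sigma> *\<^sub>R B (adjoint B (y (Suc k)) + (adjoint A (x (Suc k)) - c)))"

lemma vx_sub: "vx k \<in> subdiff p (x (Suc k))"
proof -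
  define h where "h u = gf (x k) \<bullet> u + qf (\<lambda>w. Shf w + S w) (u - x k) / 2 + z k \<bullet> adjoint A u
     + \<sigma> / 2 * (norm (adjoint A u + adjoint B (y k) - c))\<^sup>2" for u
  have h': "h u = gf (x k) \<bullet> u + qf (\<lambda>w. Shf w + S w) (u - x k) / 2 + z k \<bullet> adjoint A u
     + \<sigma> / 2 * (norm (adjoint A u + (adjoint B (y k) - c)))\<^sup>2" for u
    unfolding h_def by (simp add: add_diff_eq)
  show ?thesis unfolding vx_def
  proof (rule sub_of_min[OF p_cv p_nm x_fin])
    show "p (x (Suc k)) + ereal (h (x (Suc k))) \<le> p u + ereal (h u)" for u
      unfolding h_def by (rule x_step)
    show "h (x (Suc k) + t *\<^sub>R d) \<le> h (x (Suc k)) + t * ((gf (x k) + (Shf (x (Suc k) - x k) + S (x (Suc k) - x k)) + A (z k)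
    + \<sigma> *\<^sub>R A (adjoint A (x (Suc k)) + (adjoint B (y k) - c))) \<bullet> d) + t\<^sup>2 * ((qf (\<lambda>w. Shf w + S w) d + \<sigma> * (norm (adjoint A d))\<^sup>2)/2)" for t d
      using quad_expand[OF SG A_lin h'] by simp
  qed
qed

lemma vy_sub: "vy k \<in> subdiff q (y (Suc k))"
proof -
  define h where "h v = gg (y k) \<bullet> v + qf (\<lambda>w. Shg w + T w) (v - y k) / 2 + z k \<bullet> adjoint B v
     + \<sigma> / 2 * (norm (adjoint A (x (Suc k)) + adjoint B v - c))\<^sup>2" for v
  have h': "h v = gg (y k) \<bullet> v + qf (\<lambda>w. Shg w + T w) (v - y k) / 2 + z k \<bullet> adjoint B v
     + \<sigma> / 2 * (norm (adjoint B v + (adjoint A (x (Suc k)) - c)))\<^sup>2" for v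
    unfolding h_def by (simp add: algebra_simps)
  show ?thesis unfolding vy_def
  proof (rule sub_of_min[OF q_cv q_nm y_fin])
    show "q (y (Suc k)) + ereal (h (y (Suc k))) \<le> q u + ereal (h u)" for u
      unfolding h_def by (rule y_step)
    show "h (y (Suc k) + t *\<^sub>R d) \<le> h (y (Suc k)) + t * ((gg (y k) + (Shg (y (Suc k) - y k) + T (y (Suc k) - y k)) + B (z k)
    + \<sigma> *\<^sub>R B (adjoint B (y (Suc k)) + (adjoint A (x (Suc k)) - c))) \<bullet> d) + t\<^sup>2 * ((qf (\<lambda>w. Shg w + T w) d + \<sigma> * (norm (adjoint B d))\<^sup>2)/2)" for t d
      using quad_expand[OF SH B_lin h'] by simp
  qed
qed

end

lemma combine:
  fixes n0 n1 GX0 GX1 HY0 HY1 Bn0 Bn1 X1 X0 Xd Sd Y1 Y0 Yd Td RR RR0 Rb R0b bb aa HYs HYt Sfd Sgd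
    \<alpha> \<tau> \<sigma> \<delta> \<beta> :: real
  assumes I: "(n1 - n0) / (2*\<tau>*\<sigma>) + (GX1 - GX0)/2 + (HY1 - HY0)/2 + \<sigma>/2 * (Bn1 - Bn0)
     + X1/2 + X0/2 - Xd/2 + (Xd + Sd)/2 + Y1/2 + Y0/2 - Yd/2 + HYt/2
     + (1 - \<tau>/2)*\<sigma>*RR - \<sigma>*Rb + \<sigma>/2*bb \<le> 0"
    and HYt: "HYt = Yd + Td"
    and M: "\<sigma>*Rb \<le> (1-\<tau>)*\<sigma>*R0b + HYs/2 - HYt/2"
    and CS: "(1-\<tau>)*\<sigma>*R0b \<le> \<sigma>*\<delta>/2*bb + \<beta>*RR0"
    and AX: "aa \<le> 2*(RR - 2*Rb + bb) + 2*RR0"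
    and px: "Sfd/2 \<le> X1 + X0" and py: "Sgd/2 \<le> Y1 + Y0"
    and a: "0 \<le> \<alpha>" "\<alpha> \<le> 1" and s: "0 < \<sigma>" and t: "0 < \<tau>"
  shows "(n0/(2*\<tau>*\<sigma>) + GX0/2 + HY0/2 + \<sigma>/2*Bn0 + \<alpha>/2*HYs + (\<alpha>*\<beta> + (1-\<alpha>)*\<sigma>/2)*RR0)
       - (n1/(2*\<tau>*\<sigma>) + GX1/2 + HY1/2 + \<sigma>/2*Bn1 + \<alpha>/2*HYt + (\<alpha>*\<beta> + (1-\<alpha>)*\<sigma>/2)*RR)
     \<ge> (Sfd/2 + Sd + (1-\<alpha>)*\<sigma>/2*aa)/2 + (Sgd/2 + Td + (1-\<delta>)*\<alpha>*\<sigma>*bb)/2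
       + (\<sigma>*(\<alpha>*(1-\<tau>/2) + (1-\<tau>)*(1-\<alpha>)/2) - (\<alpha>*\<beta> + (1-\<alpha>)*\<sigma>/2)) * RR"
proof -
  let ?sI = "- ((n1 - n0) / (2*\<tau>*\<sigma>) + (GX1 - GX0)/2 + (HY1 - HY0)/2 + \<sigma>/2 * (Bn1 - Bn0)
     + X1/2 + X0/2 - Xd/2 + (Xd + Sd)/2 + Y1/2 + Y0/2 - Yd/2 + HYt/2
     + (1 - \<tau>/2)*\<sigma>*RR - \<sigma>*Rb + \<sigma>/2*bb)"
  let ?sM = "(1-\<tau>)*\<sigma>*R0b + HYs/2 - HYt/2 - \<sigma>*Rb"
  let ?sC = "\<sigma>*\<delta>/2*bb + \<beta>*RR0 - (1-\<tau>)*\<sigma>*R0b"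
  let ?sA = "2*(RR - 2*Rb + bb) + 2*RR0 - aa"
  let ?sx = "X1 + X0 - Sfd/2" let ?sy = "Y1 + Y0 - Sgd/2"
  have nn: "0 \<le> ?sI" "0 \<le> ?sM" "0 \<le> ?sC" "0 \<le> ?sA" "0 \<le> ?sx" "0 \<le> ?sy"
    using I M CS AX px py by linarith+
  have "0 \<le> ?sI + \<alpha> * ?sM + \<alpha> * ?sC + ((1-\<alpha>)*\<sigma>/4) * ?sA + ?sx/2 + ?sy/2"
    using nn a s by (intro add_nonneg_nonneg mult_nonneg_nonneg) auto
  also have "?sI + \<alpha> * ?sM + \<alpha> * ?sC + ((1-\<alpha>)*\<sigma>/4) * ?sA + ?sx/2 + ?sy/2
    = (n0/(2*\<tau>*\<sigma>) + GX0/2 + HY0/2 + \<sigma>/2*Bn0 + \<alpha>/2*HYs + (\<alpha>*\<beta> + (1-\<alpha>)*\<sigma>/2)*RR0)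
       - (n1/(2*\<tau>*\<sigma>) + GX1/2 + HY1/2 + \<sigma>/2*Bn1 + \<alpha>/2*HYt + (\<alpha>*\<beta> + (1-\<alpha>)*\<sigma>/2)*RR)
     - ((Sfd/2 + Sd + (1-\<alpha>)*\<sigma>/2*aa)/2 + (Sgd/2 + Td + (1-\<delta>)*\<alpha>*\<sigma>*bb)/2
       + (\<sigma>*(\<alpha>*(1-\<tau>/2) + (1-\<tau>)*(1-\<alpha>)/2) - (\<alpha>*\<beta> + (1-\<alpha>)*\<sigma>/2)) * RR)"
    unfolding HYt by (simp add: algebra_simps diff_divide_distrib add_divide_distrib)
  finally show ?thesis by linarith
qed

lemma lin_aux:
  fixes gfd ggd QG1 QG0 Xd Sd QH1 QH0 QHd N RR Rb B1 B0 bb X1 X0 Y1 Y0 Yd \<tau> \<sigma> :: real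
  assumes h: "gfd + ggd + (QG1 - QG0 + (Xd + Sd)) / 2 + (QH1 - QH0 + QHd) / 2 +
      (N / (2 * \<tau> * \<sigma>) + (1 - \<tau> / 2) * \<sigma> * RR - \<sigma> * Rb + (\<sigma> / 2 * (B1 - B0) + \<sigma> / 2 * bb)) \<le> 0"
    and g1: "X1 / 2 + X0 / 2 - Xd / 2 \<le> gfd" and g2: "Y1 / 2 + Y0 / 2 - Yd / 2 \<le> ggd"
  shows "N / (2 * \<tau> * \<sigma>) + (QG1 - QG0) / 2 + (QH1 - QH0) / 2 + \<sigma> / 2 * (B1 - B0) + X1 / 2 + X0 / 2 - Xd / 2
    + (Xd + Sd) / 2 + Y1 / 2 + Y0 / 2 - Yd / 2 + QHd / 2 + (1 - \<tau> / 2) * \<sigma> * RR - \<sigma> * Rb + \<sigma> / 2 * bb \<le> 0"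
proof -
  have e: "N / (2 * \<tau> * \<sigma>) + (QG1 - QG0) / 2 + (QH1 - QH0) / 2 + \<sigma> / 2 * (B1 - B0) + X1 / 2 + X0 / 2 - Xd / 2
    + (Xd + Sd) / 2 + Y1 / 2 + Y0 / 2 - Yd / 2 + QHd / 2 + (1 - \<tau> / 2) * \<sigma> * RR - \<sigma> * Rb + \<sigma> / 2 * bb
    = (gfd + ggd + (QG1 - QG0 + (Xd + Sd)) / 2 + (QH1 - QH0 + QHd) / 2 +
      (N / (2 * \<tau> * \<sigma>) + (1 - \<tau> / 2) * \<sigma> * RR - \<sigma> * Rb + (\<sigma> / 2 * (B1 - B0) + \<sigma> / 2 * bb)))
      - (gfd - (X1 / 2 + X0 / 2 - Xd / 2)) - (ggd - (Y1 / 2 + Y0 / 2 - Yd / 2))"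
    by (simp add: algebra_simps add_divide_distrib diff_divide_distrib)
  show ?thesis unfolding e using h g1 g2 by linarith
qed

lemma grad3:
  fixes f :: "'a::real_inner \<Rightarrow> real"
  assumes lo: "\<And>u u'. f u' + (u - u') \<bullet> gf u' + qf Sf (u - u') / 2 \<le> f u"
    and up: "\<And>u u'. f u \<le> f u' + (u - u') \<bullet> gf u' + qf Shf (u - u') / 2"
    and l: "linear Sf"
  shows "(gf x0 - gf xb) \<bullet> (x1 - xb) \<ge> qf Sf (x1 - xb)/2 + qf Sf (x0 - xb)/2 - qf Shf (x1 - x0)/2"
proof -
  have 1: "f x0 + (xb - x0) \<bullet> gf x0 + qf Sf (x0 - xb) / 2 \<le> f xb"
    using lo[where u=xb and u'=x0] qf_neg[OF l, of "x0 - xb"] by simp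
  have 2: "f xb + (x1 - xb) \<bullet> gf xb + qf Sf (x1 - xb) / 2 \<le> f x1" by (rule lo)
  have 3: "f x1 \<le> f x0 + (x1 - x0) \<bullet> gf x0 + qf Shf (x1 - x0) / 2" by (rule up)
  have e: "(gf x0 - gf xb) \<bullet> (x1 - xb) = (x1 - x0) \<bullet> gf x0 - (xb - x0) \<bullet> gf x0 - (x1 - xb) \<bullet> gf xb"
    by (simp add: inner_diff_left inner_diff_right inner_commute)
  show ?thesis using 1 2 3 e by linarith
qed

lemma gradG:
  fixes f :: "'a::real_inner \<Rightarrow> real"
  assumes lo: "\<And>u u'. f u' + (u - u') \<bullet> gf u' + qf Sf (u - u') / 2 \<le> f u"
    and up: "\<And>u u'. f u \<le> f u' + (u - u') \<bullet> gf u' + qf Shf (u - u') / 2"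
    and ps: "psd Sf" and l: "linear Shf"
  shows "(gf a - gf b) \<bullet> (c - a) \<ge> - qf Shf (c - a - (a - b)) / 4"
proof -
  define u where "u = (1/2) *\<^sub>R (c - a - (a - b))"
  have qu: "qf Shf u = qf Shf (c - a - (a - b)) / 4"
    unfolding u_def qf_scale[OF l] by (simp add: power2_eq_square)
  have qn: "qf Shf (- u) = qf Shf u" by (rule qf_neg[OF l])
  have s0: "\<And>v. 0 \<le> qf Sf v" using ps by (simp add: psd_def)
  have L1: "f b + (a + u - b) \<bullet> gf b \<le> f (a + u)" using lo[where u="a + u" and u'=b] s0[of "a + u - b"] by linarith
  have U1: "f (a + u) \<le> f a + u \<bullet> gf a + qf Shf u / 2" using up[where u="a + u" and u'=a] by simp
  have L2: "f a + (b - u - a) \<bullet> gf a \<le> f (b - u)" using lo[where u="b - u" and u'=a] s0[of "b - u - a"] by linarith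
  have U2: "f (b - u) \<le> f b - u \<bullet> gf b + qf Shf u / 2" using up[where u="b - u" and u'=b] qn by simp
  have ca: "c - a = (a - b) + 2 *\<^sub>R u" by (simp add: u_def algebra_simps)
  have e1: "(a + u - b) \<bullet> gf b = a \<bullet> gf b + u \<bullet> gf b - b \<bullet> gf b" by (simp add: inner_add_left inner_diff_left)
  have e2: "(b - u - a) \<bullet> gf a = b \<bullet> gf a - u \<bullet> gf a - a \<bullet> gf a" by (simp add: inner_add_left inner_diff_left)
  have e3: "(gf a - gf b) \<bullet> (c - a) = a \<bullet> gf a - a \<bullet> gf b - b \<bullet> gf a + b \<bullet> gf b + 2 * (u \<bullet> gf a) - 2 * (u \<bullet> gf b)"
    unfolding ca by (simp add: inner_add_right inner_diff_right inner_diff_left inner_commute)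
  show ?thesis using L1 U1 L2 U2 e1 e2 e3 qu by linarith
qed

lemma subdiff_mono:
  assumes v1: "v1 \<in> subdiff h a" and v2: "v2 \<in> subdiff h b" and nm: "\<And>u. h u \<noteq> -\<infinity>"
  shows "0 \<le> (v1 - v2) \<bullet> (a - b)"
proof -
  obtain ha where ha: "h a = ereal ha" using v1 nm[of a] by (cases "h a") (auto simp: subdiff_def)
  obtain hb where hb: "h b = ereal hb" using v2 nm[of b] by (cases "h b") (auto simp: subdiff_def)
  have "h a + ereal (v1 \<bullet> (b - a)) \<le> h b" using v1 by (simp add: subdiff_def)
  hence 1: "ha + v1 \<bullet> (b - a) \<le> hb" using ha hb by simp
  have "h b + ereal (v2 \<bullet> (a - b)) \<le> h a" using v2 by (simp add: subdiff_def)
  hence 2: "hb + v2 \<bullet> (a - b) \<le> ha" using ha hb by simp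
  have e: "(v1 - v2) \<bullet> (a - b) = - (v1 \<bullet> (b - a)) - v2 \<bullet> (a - b)"
    by (simp add: inner_diff_left inner_diff_right)
  show ?thesis using 1 2 e by linarith
qed

lemma zalg:
  fixes a1 b1 b0 ze0 ze1 R w Bdy :: "'a::real_inner"
  assumes R: "R = a1 + b1" and w: "w = R - Bdy" and Bdy: "Bdy = b1 - b0"
    and z: "ze1 = ze0 + (\<tau>*\<sigma>) *\<^sub>R R" and ts: "\<tau>*\<sigma> \<noteq> 0"
  shows "ze0 \<bullet> a1 + \<sigma> * (w \<bullet> a1) + ze0 \<bullet> b1 + \<sigma> * (R \<bullet> b1)
     = ((norm ze1)\<^sup>2 - (norm ze0)\<^sup>2) / (2*\<tau>*\<sigma>) + (1 - \<tau>/2)*\<sigma>*(norm R)\<^sup>2 - \<sigma>*(R \<bullet> Bdy)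
       + \<sigma>/2 * ((norm b1)\<^sup>2 - (norm b0)\<^sup>2 + (norm Bdy)\<^sup>2)"
proof -
  have n1: "(norm ze1)\<^sup>2 = (norm ze0)\<^sup>2 + 2*(\<tau>*\<sigma>)*(ze0 \<bullet> R) + (\<tau>*\<sigma>)\<^sup>2 * (norm R)\<^sup>2"
    unfolding z normsq_add by (simp add: power_mult_distrib)
  have b0: "b0 = b1 - Bdy" using Bdy by simp
  have nb0: "(norm b0)\<^sup>2 = (norm b1)\<^sup>2 - 2*(b1 \<bullet> Bdy) + (norm Bdy)\<^sup>2"
    unfolding b0 normsq_diff ..
  have a1: "a1 = R - b1" using R by simp
  have l1: "ze0 \<bullet> a1 + ze0 \<bullet> b1 = ze0 \<bullet> R" by (simp add: R inner_add_right)
  have l2: "w \<bullet> a1 + R \<bullet> b1 = (norm R)\<^sup>2 - R \<bullet> Bdy + b1 \<bullet> Bdy"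
    unfolding w a1 by (simp add: inner_diff_left inner_diff_right power2_norm_eq_inner inner_commute)
  have l3: "ze0 \<bullet> R = ((norm ze1)\<^sup>2 - (norm ze0)\<^sup>2 - (\<tau>*\<sigma>)\<^sup>2 * (norm R)\<^sup>2) / (2*\<tau>*\<sigma>)"
    using n1 ts by (simp add: field_simps)
  have "ze0 \<bullet> a1 + \<sigma> * (w \<bullet> a1) + ze0 \<bullet> b1 + \<sigma> * (R \<bullet> b1) = ze0 \<bullet> R + \<sigma> * ((norm R)\<^sup>2 - R \<bullet> Bdy + b1 \<bullet> Bdy)"
    unfolding l2[symmetric] l1[symmetric] by (simp add: algebra_simps)
  also have "\<dots> = ((norm ze1)\<^sup>2 - (norm ze0)\<^sup>2) / (2*\<tau>*\<sigma>) + (1 - \<tau>/2)*\<sigma>*(norm R)\<^sup>2 - \<sigma>*(R \<bullet> Bdy)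
       + \<sigma>/2 * ((norm b1)\<^sup>2 - (norm b0)\<^sup>2 + (norm Bdy)\<^sup>2)"
    unfolding l3 nb0 using ts by (simp add: field_simps power2_eq_square)
  finally show ?thesis .
qed

locale admm_kkt = admm +
  fixes xb yb zb
  assumes kx: "- (gf xb + A zb) \<in> subdiff p xb" and ky: "- (gg yb + B zb) \<in> subdiff q yb"
    and kf: "adjoint A xb + adjoint B yb = c"
begin

abbreviation "At \<equiv> adjoint A"
abbreviation "Bt \<equiv> adjoint B"
abbreviation "Gx \<equiv> (\<lambda>w. Shf w + S w)"
abbreviation "Hy \<equiv> (\<lambda>w. Shg w + T w)"

definition "r k = At (x k) + Bt (y k) - c"

lemma qf_plus: "qf (\<lambda>w. F w + K w) u = qf F u + qf K u" by (simp add: qf_def inner_add_right)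

lemma stepI:
  fixes k :: nat
  defines "dx \<equiv> x (Suc k) - x k" and "dy \<equiv> y (Suc k) - y k"
  shows "((norm (z (Suc k) - zb))\<^sup>2 - (norm (z k - zb))\<^sup>2) / (2*\<tau>*\<sigma>)
     + (qf Gx (x (Suc k) - xb) - qf Gx (x k - xb))/2 + (qf Hy (y (Suc k) - yb) - qf Hy (y k - yb))/2
     + \<sigma>/2 * ((norm (Bt (y (Suc k) - yb)))\<^sup>2 - (norm (Bt (y k - yb)))\<^sup>2)
     + qf Sf (x (Suc k) - xb)/2 + qf Sf (x k - xb)/2 - qf Shf dx/2 + (qf Shf dx + qf S dx)/2
     + qf Sg (y (Suc k) - yb)/2 + qf Sg (y k - yb)/2 - qf Shg dy/2 + qf Hy dy/2
     + (1 - \<tau>/2)*\<sigma>*(norm (r (Suc k)))\<^sup>2 - \<sigma>*(r (Suc k) \<bullet> Bt dy) + \<sigma>/2*(norm (Bt dy))\<^sup>2 \<le> 0"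
proof -
  define xe1 where "xe1 = x (Suc k) - xb"
  define xe0 where "xe0 = x k - xb"
  define ye1 where "ye1 = y (Suc k) - yb"
  define ye0 where "ye0 = y k - yb"
  define w where "w = At (x (Suc k)) + (Bt (y k) - c)"
  define R where "R = r (Suc k)"
  have lA: "linear At" by (rule linAt)
  have lB: "linear Bt" by (rule linBt)
  have Mx: "0 \<le> (vx k - - (gf xb + A zb)) \<bullet> (x (Suc k) - xb)" by (rule subdiff_mono[OF vx_sub kx p_nm])
  have ex: "(vx k - - (gf xb + A zb)) \<bullet> xe1 = - ((gf (x k) - gf xb) \<bullet> xe1) - Gx dx \<bullet> xe1
      - (z k - zb) \<bullet> At xe1 - \<sigma> * (w \<bullet> At xe1)"
    unfolding vx_def w_def dx_def by (simp add: inner_add_left inner_diff_left adj_l[OF A_lin])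
  have My: "0 \<le> (vy k - - (gg yb + B zb)) \<bullet> (y (Suc k) - yb)" by (rule subdiff_mono[OF vy_sub ky q_nm])
  have ey: "(vy k - - (gg yb + B zb)) \<bullet> ye1 = - ((gg (y k) - gg yb) \<bullet> ye1) - Hy dy \<bullet> ye1
      - (z k - zb) \<bullet> Bt ye1 - \<sigma> * (R \<bullet> Bt ye1)"
  proof -
    have "Bt (y (Suc k)) + (At (x (Suc k)) - c) = R" unfolding R_def r_def by (simp add: algebra_simps)
    thus ?thesis unfolding vy_def dy_def by (simp add: inner_add_left inner_diff_left adj_l[OF B_lin])
  qed
  have gx: "(gf (x k) - gf xb) \<bullet> xe1 \<ge> qf Sf xe1/2 + qf Sf xe0/2 - qf Shf dx/2"
    unfolding xe1_def xe0_def dx_def by (rule grad3[OF f_maj(1) f_maj(2) sa_lin[OF Sf(1)]])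
  have gy: "(gg (y k) - gg yb) \<bullet> ye1 \<ge> qf Sg ye1/2 + qf Sg ye0/2 - qf Shg dy/2"
    unfolding ye1_def ye0_def dy_def by (rule grad3[OF g_maj(1) g_maj(2) sa_lin[OF Sg(1)]])
  have Gi: "Gx dx \<bullet> xe1 = (qf Gx xe1 - qf Gx xe0 + qf Gx dx)/2"
  proof -
    have "xe0 = xe1 - dx" unfolding xe0_def xe1_def dx_def by simp
    hence "qf Gx xe0 = qf Gx xe1 - 2 * (Gx xe1 \<bullet> dx) + qf Gx dx" using qf_diff[OF SG, of xe1 dx] by simp
    moreover have "Gx dx \<bullet> xe1 = Gx xe1 \<bullet> dx" using SG unfolding self_adjoint_def by (metis inner_commute)
    ultimately show ?thesis by simp
  qed
  have Hi: "Hy dy \<bullet> ye1 = (qf Hy ye1 - qf Hy ye0 + qf Hy dy)/2"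
  proof -
    have "ye0 = ye1 - dy" unfolding ye0_def ye1_def dy_def by simp
    hence "qf Hy ye0 = qf Hy ye1 - 2 * (Hy ye1 \<bullet> dy) + qf Hy dy" using qf_diff[OF SH, of ye1 dy] by simp
    moreover have "Hy dy \<bullet> ye1 = Hy ye1 \<bullet> dy" using SH unfolding self_adjoint_def by (metis inner_commute)
    ultimately show ?thesis by simp
  qed
  have Gd: "qf Gx dx = qf Shf dx + qf S dx" by (rule qf_plus)
  have za: "(z k - zb) \<bullet> At xe1 + \<sigma> * (w \<bullet> At xe1) + (z k - zb) \<bullet> Bt ye1 + \<sigma> * (R \<bullet> Bt ye1)
     = ((norm (z (Suc k) - zb))\<^sup>2 - (norm (z k - zb))\<^sup>2) / (2*\<tau>*\<sigma>) + (1 - \<tau>/2)*\<sigma>*(norm R)\<^sup>2 - \<sigma>*(R \<bullet> Bt dy)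
       + \<sigma>/2 * ((norm (Bt ye1))\<^sup>2 - (norm (Bt ye0))\<^sup>2 + (norm (Bt dy))\<^sup>2)"
  proof (rule zalg)
    show "R = At xe1 + Bt ye1"
      unfolding R_def r_def xe1_def ye1_def linear_diff[OF lA] linear_diff[OF lB] using kf by (simp add: algebra_simps)
    show "w = R - Bt dy"
      unfolding R_def r_def w_def dy_def linear_diff[OF lB] by (simp add: algebra_simps)
    show "Bt dy = Bt ye1 - Bt ye0"
      unfolding dy_def ye1_def ye0_def linear_diff[OF lB] by simp
    show "z (Suc k) - zb = z k - zb + (\<tau> * \<sigma>) *\<^sub>R R"
      unfolding R_def r_def z_step by simp
    show "\<tau> * \<sigma> \<noteq> 0" using \<tau> \<sigma> by simp
  qed
  have e: "\<sigma>/2 * ((norm (Bt ye1))\<^sup>2 - (norm (Bt ye0))\<^sup>2 + (norm (Bt dy))\<^sup>2)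
     = \<sigma>/2 * ((norm (Bt ye1))\<^sup>2 - (norm (Bt ye0))\<^sup>2) + \<sigma>/2*(norm (Bt dy))\<^sup>2" by (simp add: algebra_simps)
  have S1: "(gf (x k) - gf xb) \<bullet> xe1 + (gg (y k) - gg yb) \<bullet> ye1 + Gx dx \<bullet> xe1 + Hy dy \<bullet> ye1
     + ((z k - zb) \<bullet> At xe1 + \<sigma> * (w \<bullet> At xe1) + (z k - zb) \<bullet> Bt ye1 + \<sigma> * (R \<bullet> Bt ye1)) \<le> 0"
    using Mx ex My ey unfolding xe1_def[symmetric] ye1_def[symmetric] by linarith
  note S2 = S1[unfolded Gi Hi za e Gd]
  define QG1 where "QG1 = qf Gx xe1"
  define QG0 where "QG0 = qf Gx xe0"
  define QH1 where "QH1 = qf Hy ye1"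
  define QH0 where "QH0 = qf Hy ye0"
  define QHd where "QHd = qf Hy dy"
  note S3 = S2[unfolded QG1_def[symmetric] QG0_def[symmetric] QH1_def[symmetric] QH0_def[symmetric] QHd_def[symmetric]]
  show ?thesis
    unfolding xe1_def[symmetric] xe0_def[symmetric] ye1_def[symmetric] ye0_def[symmetric] R_def[symmetric]
      QG1_def[symmetric] QG0_def[symmetric] QH1_def[symmetric] QH0_def[symmetric] QHd_def[symmetric]
    by (rule lin_aux[OF S3 gx gy])
qed

lemma vy_r: "Bt (y (Suc k)) + (At (x (Suc k)) - c) = r (Suc k)" by (simp add: r_def algebra_simps)

lemma stepM:
  fixes j :: nat
  defines "t \<equiv> y (Suc (Suc j)) - y (Suc j)" and "s \<equiv> y (Suc j) - y j"
  shows "\<sigma> * (r (Suc (Suc j)) \<bullet> Bt t) \<le> (1 - \<tau>) * \<sigma> * (r (Suc j) \<bullet> Bt t) + qf Hy s / 2 - qf Hy t / 2"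
proof -
  define R2 where "R2 = r (Suc (Suc j))"
  define R1 where "R1 = r (Suc j)"
  have M: "0 \<le> (vy (Suc j) - vy j) \<bullet> (y (Suc (Suc j)) - y (Suc j))"
    by (rule subdiff_mono[OF vy_sub vy_sub q_nm])
  have zz: "z (Suc j) = z j + (\<tau> * \<sigma>) *\<^sub>R R1" unfolding R1_def r_def z_step by simp
  have ev: "vy (Suc j) - vy j = - (gg (y (Suc j)) - gg (y j)) - Hy t + Hy s - (\<tau> * \<sigma>) *\<^sub>R B R1
      - \<sigma> *\<^sub>R B R2 + \<sigma> *\<^sub>R B R1"
    unfolding vy_def vy_r t_def s_def R1_def[symmetric] R2_def[symmetric] zz
    by (simp add: linear_add[OF B_lin] linear_scale[OF B_lin] algebra_simps)
  have hq: "qf Hy t = Hy t \<bullet> t" by (simp add: qf_def inner_commute)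
  have e2: "(vy (Suc j) - vy j) \<bullet> t = - ((gg (y (Suc j)) - gg (y j)) \<bullet> t) - Hy t \<bullet> t + Hy s \<bullet> t
      - \<sigma> * (R2 \<bullet> Bt t) + (1 - \<tau>) * \<sigma> * (R1 \<bullet> Bt t)"
    unfolding ev by (simp add: inner_add_left inner_diff_left adj_l[OF B_lin] algebra_simps)
  have gG: "(gg (y (Suc j)) - gg (y j)) \<bullet> t \<ge> - qf Shg (t - s) / 4"
    unfolding t_def s_def by (rule gradG[OF g_maj(1) g_maj(2) Sg(2) sa_lin[OF Shg(1)]])
  have hs: "Hy s \<bullet> t = (qf Hy t + qf Hy s - qf Hy (t - s)) / 2"
  proof -
    have "qf Hy (t - s) = qf Hy t - 2 * (Hy t \<bullet> s) + qf Hy s" by (rule qf_diff[OF SH])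
    moreover have "Hy s \<bullet> t = Hy t \<bullet> s" using SH unfolding self_adjoint_def by (metis inner_commute)
    ultimately show ?thesis by simp
  qed
  have c3: "0 \<le> qf Shg (t - s) / 2 + qf T (t - s)"
    using cond3 unfolding psd_def by (simp add: qf_def inner_add_right)
  have hp: "qf Hy (t - s) = qf Shg (t - s) + qf T (t - s)" by (rule qf_plus)
  define P where "P = (1 - \<tau>) * \<sigma> * (R1 \<bullet> Bt t)"
  define Q where "Q = \<sigma> * (R2 \<bullet> Bt t)"
  have e3: "(vy (Suc j) - vy j) \<bullet> t = - ((gg (y (Suc j)) - gg (y j)) \<bullet> t) - Hy t \<bullet> t + Hy s \<bullet> t - Q + P"
    using e2 unfolding P_def Q_def .
  define a1 where "a1 = Hy t \<bullet> t"
  define a2 where "a2 = Hy s \<bullet> t"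
  define q1 where "q1 = qf Hy s"
  define q2 where "q2 = qf Hy t"
  define q3 where "q3 = qf Hy (t - s)"
  have "Q \<le> P + q1 / 2 - q2 / 2"
    using M e3 gG hs c3 hp hq unfolding t_def[symmetric] a1_def[symmetric] a2_def[symmetric]
      q1_def[symmetric] q2_def[symmetric] q3_def[symmetric] by argo
  hence "Q \<le> P + qf Hy s / 2 - qf Hy t / 2" unfolding q1_def q2_def .
  thus ?thesis unfolding P_def Q_def R1_def R2_def t_def .
qed

end

lemma cs_bound:
  fixes R0 b :: "'a::real_inner" and \<tau> \<sigma> :: real
  assumes t: "0 < \<tau>" and s: "0 < \<sigma>"
  shows "(1-\<tau>)*\<sigma>*(R0 \<bullet> b) \<le> \<sigma>*(if \<tau> \<le> 1 then 1 - \<tau> else (\<tau>-1)*\<tau>)/2*(norm b)\<^sup>2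
     + (if \<tau> \<le> 1 then (1-\<tau>)*\<sigma>/2 else (\<tau>-1)*\<sigma>/(2*\<tau>))*(norm R0)\<^sup>2"
proof (cases "\<tau> \<le> 1")
  case True
  have "0 \<le> (norm (R0 - b))\<^sup>2" by simp
  hence h: "2*(R0 \<bullet> b) \<le> (norm R0)\<^sup>2 + (norm b)\<^sup>2" unfolding normsq_diff by simp
  have c: "0 \<le> (1-\<tau>)*\<sigma>/2" using True s by simp
  have "(1-\<tau>)*\<sigma>*(R0 \<bullet> b) = (1-\<tau>)*\<sigma>/2 * (2*(R0 \<bullet> b))" by simp
  also have "\<dots> \<le> (1-\<tau>)*\<sigma>/2 * ((norm R0)\<^sup>2 + (norm b)\<^sup>2)"
    by (rule mult_left_mono[OF h c])
  also have "\<dots> = \<sigma>*(1 - \<tau>)/2*(norm b)\<^sup>2 + (1-\<tau>)*\<sigma>/2*(norm R0)\<^sup>2" by (simp add: algebra_simps)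
  finally show ?thesis using True by simp
next
  case False
  have "0 \<le> (norm (\<tau> *\<^sub>R b + R0))\<^sup>2" by simp
  hence h0: "0 \<le> \<tau>\<^sup>2 * (norm b)\<^sup>2 + 2*\<tau>*(R0 \<bullet> b) + (norm R0)\<^sup>2"
    unfolding normsq_add by (simp add: power_mult_distrib inner_commute)
  have h: "0 \<le> \<tau> * (norm b)\<^sup>2 + 2*(R0 \<bullet> b) + (norm R0)\<^sup>2 / \<tau>"
  proof -
    have "0 \<le> (\<tau>\<^sup>2 * (norm b)\<^sup>2 + 2*\<tau>*(R0 \<bullet> b) + (norm R0)\<^sup>2) / \<tau>" using h0 t by simp
    also have "\<dots> = \<tau> * (norm b)\<^sup>2 + 2*(R0 \<bullet> b) + (norm R0)\<^sup>2 / \<tau>" using t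
      by (simp add: field_simps power2_eq_square)
    finally show ?thesis .
  qed
  have c: "0 \<le> (\<tau>-1)*\<sigma>/2" using False s by simp
  have "(\<tau>-1)*\<sigma>/2 * 0 \<le> (\<tau>-1)*\<sigma>/2 * (\<tau> * (norm b)\<^sup>2 + 2*(R0 \<bullet> b) + (norm R0)\<^sup>2 / \<tau>)"
    by (rule mult_left_mono[OF h c])
  moreover have "(\<tau>-1)*\<sigma>/2 * (\<tau> * (norm b)\<^sup>2 + 2*(R0 \<bullet> b) + (norm R0)\<^sup>2 / \<tau>)
     = (\<sigma>*((\<tau>-1)*\<tau>)/2*(norm b)\<^sup>2 + (\<tau>-1)*\<sigma>/(2*\<tau>)*(norm R0)\<^sup>2) - (1-\<tau>)*\<sigma>*(R0 \<bullet> b)"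
    using t by (simp add: field_simps)
  ultimately show ?thesis using False by simp
qed

lemma ax_bound:
  fixes R R0 Bd :: "'a::real_inner"
  shows "(norm (R - R0 - Bd))\<^sup>2 \<le> 2*((norm R)\<^sup>2 - 2*(R \<bullet> Bd) + (norm Bd)\<^sup>2) + 2*(norm R0)\<^sup>2"
proof -
  have e1: "R - R0 - Bd = (R - Bd) - R0" by simp
  have "0 \<le> (norm ((R - Bd) + R0))\<^sup>2" by simp
  hence "(norm ((R - Bd) - R0))\<^sup>2 \<le> 2*(norm (R - Bd))\<^sup>2 + 2*(norm R0)\<^sup>2"
    unfolding normsq_add normsq_diff[of "R - Bd" R0] by argo
  moreover have "(norm (R - Bd))\<^sup>2 = (norm R)\<^sup>2 - 2*(R \<bullet> Bd) + (norm Bd)\<^sup>2" by (rule normsq_diff)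
  ultimately show ?thesis unfolding e1 by simp
qed

context admm_kkt begin

definition "\<beta>c = (if \<tau> \<le> 1 then (1-\<tau>)*\<sigma>/2 else (\<tau>-1)*\<sigma>/(2*\<tau>))"
definition "\<delta>c = (if \<tau> \<le> 1 then 1 - \<tau> else (\<tau>-1)*\<tau>)"
definition "\<kappa> = \<alpha>*\<beta>c + (1-\<alpha>)*\<sigma>/2"
definition "\<gamma> = \<sigma>*(\<alpha>*(1-\<tau>/2) + (1-\<tau>)*(1-\<alpha>)/2) - \<kappa>"

definition "E k = (norm (z k - zb))\<^sup>2/(2*\<tau>*\<sigma>) + qf Gx (x k - xb)/2 + qf Hy (y k - yb)/2
   + \<sigma>/2*(norm (Bt (y k - yb)))\<^sup>2 + \<alpha>/2*qf Hy (y k - y (k - 1)) + \<kappa>*(norm (r k))\<^sup>2"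

lemma alpha_pos: "0 < \<alpha>"
proof -
  have "0 < 1/\<tau>" using \<tau> by simp
  hence b: "0 < 1 + 1/\<tau>" by linarith
  have a: "0 < 1 + \<tau>" using \<tau> by simp
  have "0 < min (1 + \<tau>) (1 + 1/\<tau>)" using a b by simp
  hence "0 < \<tau> / min (1 + \<tau>) (1 + 1/\<tau>)" using \<tau> by simp
  thus ?thesis using \<alpha> by linarith
qed

lemma decrease:
  fixes j :: nat
  defines "dx \<equiv> x (Suc (Suc j)) - x (Suc j)" and "dy \<equiv> y (Suc (Suc j)) - y (Suc j)"
  shows "E (Suc j) - E (Suc (Suc j)) \<ge> (qf Sf dx/2 + qf S dx + (1-\<alpha>)*\<sigma>/2*(norm (At dx))\<^sup>2)/2
     + (qf Sg dy/2 + qf T dy + (1-\<delta>c)*\<alpha>*\<sigma>*(norm (Bt dy))\<^sup>2)/2 + \<gamma>*(norm (r (Suc (Suc j))))\<^sup>2"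
proof -
  note I = stepI[of "Suc j"]
  note M = stepM[of j]
  have CS: "(1-\<tau>)*\<sigma>*(r (Suc j) \<bullet> Bt dy) \<le> \<sigma>*\<delta>c/2*(norm (Bt dy))\<^sup>2 + \<beta>c*(norm (r (Suc j)))\<^sup>2"
    unfolding \<delta>c_def \<beta>c_def by (rule cs_bound[OF \<tau>(1) \<sigma>])
  have Adx: "At dx = r (Suc (Suc j)) - r (Suc j) - Bt dy"
    unfolding dx_def dy_def r_def linear_diff[OF linAt] linear_diff[OF linBt] by (simp add: algebra_simps)
  have AX: "(norm (At dx))\<^sup>2 \<le> 2*((norm (r (Suc (Suc j))))\<^sup>2 - 2*(r (Suc (Suc j)) \<bullet> Bt dy) + (norm (Bt dy))\<^sup>2)
      + 2*(norm (r (Suc j)))\<^sup>2"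
    unfolding Adx by (rule ax_bound)
  have px: "qf Sf dx/2 \<le> qf Sf (x (Suc (Suc j)) - xb) + qf Sf (x (Suc j) - xb)"
    using psd_par[OF Sf, of "x (Suc (Suc j)) - xb" "x (Suc j) - xb"] unfolding dx_def by simp
  have py: "qf Sg dy/2 \<le> qf Sg (y (Suc (Suc j)) - yb) + qf Sg (y (Suc j) - yb)"
    using psd_par[OF Sg, of "y (Suc (Suc j)) - yb" "y (Suc j) - yb"] unfolding dy_def by simp
  have HYt: "qf Hy dy = qf Shg dy + qf T dy" by (rule qf_plus)
  note C = combine[OF I[folded dx_def dy_def] HYt M[folded dy_def] CS AX px py alpha_pos[THEN less_imp_le] \<alpha>(2) \<sigma> \<tau>(1)]
  show ?thesis using C unfolding E_def \<kappa>_def[symmetric] \<gamma>_def[symmetric] dx_def dy_def by simp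
qed

end

lemma pd_coercive:
  fixes G :: "'a::euclidean_space \<Rightarrow> 'a"
  assumes l: "linear G" and pd: "pd G"
  shows "\<exists>m>0. \<forall>u. m * (norm u)\<^sup>2 \<le> qf G u"
proof -
  have bl: "bounded_linear G" using l by (simp add: linear_conv_bounded_linear)
  have cont: "continuous_on (sphere 0 1) (\<lambda>u. qf G u)"
    unfolding qf_def by (intro continuous_intros linear_continuous_on[OF bl])
  obtain b :: 'a where b: "b \<in> Basis" using nonempty_Basis by blast
  have ne: "sphere (0::'a) 1 \<noteq> {}" using b by (auto simp: sphere_def norm_Basis intro!: exI[of _ b])
  obtain u0 where u0: "u0 \<in> sphere 0 1" and mn: "\<And>v. v \<in> sphere 0 1 \<Longrightarrow> qf G u0 \<le> qf G v"
    using continuous_attains_inf[OF compact_sphere ne cont] by blast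
  have "u0 \<noteq> 0" using u0 by auto
  hence m0: "0 < qf G u0" using pd by (simp add: pd_def)
  have "qf G u0 * (norm u)\<^sup>2 \<le> qf G u" for u
  proof (cases "u = 0")
    case True thus ?thesis by (simp add: qf_def linear_0[OF l])
  next
    case False
    define v where "v = u /\<^sub>R norm u"
    have v: "v \<in> sphere 0 1" using False by (simp add: v_def)
    have uv: "u = norm u *\<^sub>R v" using False by (simp add: v_def)
    have "qf G u = (norm u)\<^sup>2 * qf G v" by (subst uv, rule qf_scale[OF l])
    moreover have "qf G u0 \<le> qf G v" by (rule mn[OF v])
    ultimately show ?thesis by (metis mult.commute mult_right_mono zero_le_power2)
  qed
  thus ?thesis using m0 by blast
qed

context admm_kkt begin

lemma gamma_pos: "0 < \<gamma>"
proof (cases "\<tau> \<le> 1")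
  case True
  have "\<tau> \<le> 1/\<tau>" using True \<tau>(1) by (simp add: field_simps power2_eq_square) (metis mult_le_one less_imp_le)
  hence mn: "min (1 + \<tau>) (1 + 1/\<tau>) = 1 + \<tau>" by simp
  have "\<tau> / (1 + \<tau>) < \<alpha>" using \<alpha>(1) mn by simp
  hence h: "\<tau> < \<alpha> * (1 + \<tau>)" using \<tau>(1) by (simp add: field_simps)
  have "\<gamma> = \<sigma> * (\<alpha> * (1 + \<tau>) - \<tau>) / 2" using True
    by (simp add: \<gamma>_def \<kappa>_def \<beta>c_def field_simps)
  moreover have "0 < \<sigma> * (\<alpha> * (1 + \<tau>) - \<tau>)" using h \<sigma> by simp
  ultimately show ?thesis by simp
next
  case False
  have "1/\<tau> < \<tau>" using False by (simp add: field_simps) (metis less_1_mult not_le)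
  hence mn: "min (1 + \<tau>) (1 + 1/\<tau>) = 1 + 1/\<tau>" by simp
  have "\<tau> / (1 + 1/\<tau>) < \<alpha>" using \<alpha>(1) mn by simp
  moreover have "\<tau> / (1 + 1/\<tau>) = \<tau>\<^sup>2 / (\<tau> + 1)" using \<tau>(1) by (simp add: field_simps power2_eq_square)
  ultimately have h: "\<tau>\<^sup>2 < \<alpha> * (\<tau> + 1)" using \<tau>(1) by (simp add: field_simps)
  have "\<gamma> = \<sigma> * (\<alpha> * (\<tau> + 1) - \<tau>\<^sup>2) / (2*\<tau>)" using False \<tau>(1)
    by (simp add: \<gamma>_def \<kappa>_def \<beta>c_def field_simps power2_eq_square)
  thus ?thesis using h \<sigma> \<tau>(1) by simp
qed

lemma delta_min: "1 - \<delta>c = min \<tau> (1 + \<tau> - \<tau>\<^sup>2)"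
proof (cases "\<tau> \<le> 1")
  case True
  have "\<tau>\<^sup>2 \<le> 1" using True \<tau>(1) by (simp add: power_le_one)
  thus ?thesis using True by (simp add: \<delta>c_def)
next
  case False
  have "1 < \<tau>\<^sup>2" using False by (simp add: one_less_power)
  thus ?thesis using False by (simp add: \<delta>c_def algebra_simps power2_eq_square)
qed

lemma kappa_nn: "0 \<le> \<kappa>"
proof -
  have "0 \<le> \<beta>c" unfolding \<beta>c_def using \<sigma> \<tau>(1) by auto
  thus ?thesis unfolding \<kappa>_def using alpha_pos \<alpha>(2) \<sigma> by simp
qed

lemma qfG_nn: "0 \<le> qf Gx u" using cond1 by (simp add: psd_def)
lemma qfShg_Sg: "qf Sg u \<le> qf Shg u"
  using Shg(2) unfolding psd_def by (simp add: qf_def inner_diff_right)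
lemma qfH_nn: "0 \<le> qf Hy u"
proof -
  have "0 \<le> qf Shg u / 2 + qf T u" using cond3 unfolding psd_def by (simp add: qf_def inner_add_right)
  moreover have "0 \<le> qf Sg u" using Sg(2) by (simp add: psd_def)
  ultimately show ?thesis using qfShg_Sg[of u] qf_plus[of Shg T u] by linarith
qed

lemma E_nn: "0 \<le> E k"
  unfolding E_def using qfG_nn qfH_nn kappa_nn alpha_pos \<tau>(1) \<sigma>
  by (intro add_nonneg_nonneg mult_nonneg_nonneg divide_nonneg_pos) auto

end

lemma lin3:
  assumes "linear F" "linear K" "linear L"
  shows "linear (\<lambda>u. a *\<^sub>R F u + K u + b *\<^sub>R L u)"
  using assms unfolding linear_iff by (simp add: scaleR_add_right algebra_simps)

context admm_kkt begin

lemma qfAA: "u \<bullet> A (At u) = (norm (At u))\<^sup>2"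
  by (simp add: adj_r[OF A_lin] power2_norm_eq_inner)
lemma qfBB: "u \<bullet> B (Bt u) = (norm (Bt u))\<^sup>2"
  by (simp add: adj_r[OF B_lin] power2_norm_eq_inner)

definition "ee j = (norm (x (Suc (Suc j)) - x (Suc j)))\<^sup>2 + (norm (y (Suc (Suc j)) - y (Suc j)))\<^sup>2
   + (norm (r (Suc (Suc j))))\<^sup>2"

lemma coerc: "\<exists>\<mu>>0. \<forall>j. \<mu> * ee j \<le> E (Suc j) - E (Suc (Suc j))"
proof -
  have l2: "linear (\<lambda>u. (1/2) *\<^sub>R Sf u + S u + ((1 - \<alpha>) * \<sigma> / 2) *\<^sub>R A (At u))"
    by (rule lin3[OF sa_lin[OF Sf(1)] sa_lin[OF S] linear_compose[OF linAt A_lin, unfolded o_def]])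
  have l4: "linear (\<lambda>v. (1/2) *\<^sub>R Sg v + T v + (min \<tau> (1 + \<tau> - \<tau>\<^sup>2) * \<alpha> * \<sigma>) *\<^sub>R B (Bt v))"
    by (rule lin3[OF sa_lin[OF Sg(1)] sa_lin[OF T] linear_compose[OF linBt B_lin, unfolded o_def]])
  obtain m1 where m1: "m1 > 0" "\<And>u. m1 * (norm u)\<^sup>2 \<le> qf Sf u/2 + qf S u + (1-\<alpha>)*\<sigma>/2*(norm (At u))\<^sup>2"
    using pd_coercive[OF l2 cond2] by (auto simp: qf_def inner_add_right qfAA)
  obtain m2 where m2: "m2 > 0" "\<And>u. m2 * (norm u)\<^sup>2 \<le> qf Sg u/2 + qf T u + (1-\<delta>c)*\<alpha>*\<sigma>*(norm (Bt u))\<^sup>2"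
    using pd_coercive[OF l4 cond4] by (auto simp: qf_def inner_add_right qfBB delta_min)
  define \<mu> where "\<mu> = min (min (m1/2) (m2/2)) \<gamma>"
  have \<mu>: "\<mu> > 0" using m1 m2 gamma_pos by (simp add: \<mu>_def)
  have "\<mu> * ee j \<le> E (Suc j) - E (Suc (Suc j))" for j
  proof -
    define a where "a = (norm (x (Suc (Suc j)) - x (Suc j)))\<^sup>2"
    define b where "b = (norm (y (Suc (Suc j)) - y (Suc j)))\<^sup>2"
    define c where "c = (norm (r (Suc (Suc j))))\<^sup>2"
    have d: "E (Suc j) - E (Suc (Suc j)) \<ge> (m1 * a)/2 + (m2 * b)/2 + \<gamma> * c"
      using decrease[of j] m1(2)[of "x (Suc (Suc j)) - x (Suc j)"] m2(2)[of "y (Suc (Suc j)) - y (Suc j)"]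
      unfolding a_def b_def c_def by argo
    have "\<mu> * a \<le> (m1/2) * a" unfolding a_def by (rule mult_right_mono) (auto simp: \<mu>_def)
    moreover have "\<mu> * b \<le> (m2/2) * b" unfolding b_def by (rule mult_right_mono) (auto simp: \<mu>_def)
    moreover have "\<mu> * c \<le> \<gamma> * c" unfolding c_def by (rule mult_right_mono) (auto simp: \<mu>_def)
    moreover have "\<mu> * ee j = \<mu> * a + \<mu> * b + \<mu> * c" unfolding ee_def a_def b_def c_def by (simp add: algebra_simps)
    ultimately show ?thesis using d by argo
  qed
  thus ?thesis using \<mu> by blast
qed

lemma ee_summable: "summable ee"
proof -
  obtain \<mu> where \<mu>: "\<mu> > 0" "\<And>j. \<mu> * ee j \<le> E (Suc j) - E (Suc (Suc j))" using coerc by blast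
  have nn: "0 \<le> ee j" for j unfolding ee_def by simp
  have "\<mu> * (\<Sum>i<n. ee i) \<le> E 1 - E (Suc n)" for n
  proof (induction n)
    case 0 thus ?case by simp
  next
    case (Suc n)
    have "\<mu> * (\<Sum>i<Suc n. ee i) = \<mu> * (\<Sum>i<n. ee i) + \<mu> * ee n" by (simp add: algebra_simps)
    also have "\<dots> \<le> (E 1 - E (Suc n)) + (E (Suc n) - E (Suc (Suc n)))" using Suc.IH \<mu>(2)[of n] by linarith
    finally show ?case by simp
  qed
  hence "(\<Sum>i<n. ee i) \<le> E 1 / \<mu>" for n using E_nn[of "Suc n"] \<mu>(1)
    by (simp add: field_simps) (smt (verit) mult.commute)
  thus ?thesis by (intro summableI_nonneg_bounded[OF nn])
qed

end

lemma min_rate: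
  fixes a :: "nat \<Rightarrow> real"
  assumes nn: "\<And>i. 0 \<le> a i" and sm: "summable a" and c: "0 < c"
  shows "eventually (\<lambda>k. \<exists>i\<in>{1..k}. a i \<le> c / real k) sequentially"
proof -
  obtain N where N: "\<And>n. n \<ge> N \<Longrightarrow> norm (\<Sum>i. a (i + n)) < c/2"
    using suminf_exist_split[of "c/2" a] c sm by auto
  have "\<exists>i\<in>{1..k}. a i \<le> c / real k" if k: "k \<ge> 2*N + 2" for k
  proof (rule ccontr)
    assume "\<not> ?thesis"
    hence big: "\<And>i. i \<in> {1..k} \<Longrightarrow> c / real k < a i" by force
    define m where "m = k div 2"
    have m1: "m \<ge> 1" "m \<ge> N" "m < k" using k by (auto simp: m_def)
    have km: "real k \<le> 2 * real (k - m)" using k unfolding m_def by linarith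
    have kpos: "0 < real k" using k by simp
    have "real (card {..<k-m}) * (c / real k) \<le> (\<Sum>n<k-m. a (n + m))"
    proof (rule sum_bounded_below)
      fix n assume "n \<in> {..<k-m}"
      hence "n + m \<in> {1..k}" using m1 by auto
      thus "c / real k \<le> a (n + m)" using big by (simp add: less_imp_le)
    qed
    moreover have "c/2 \<le> real (k - m) * (c / real k)"
    proof -
      have "c/2 = (real k / 2) * (c / real k)" using kpos by simp
      also have "\<dots> \<le> real (k - m) * (c / real k)"
        by (rule mult_right_mono) (use km c kpos in auto)
      finally show ?thesis .
    qed
    moreover have "(\<Sum>n<k-m. a (n + m)) \<le> (\<Sum>n. a (n + m))"
      by (rule sum_le_suminf) (use sm nn in \<open>auto simp: summable_iff_shift\<close>)
    moreover have "(\<Sum>n. a (n + m)) < c/2" using N[OF m1(2)] by simp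
    ultimately show False by (simp only: card_lessThan)
  qed
  thus ?thesis unfolding eventually_sequentially by blast
qed

lemma lin_bound:
  fixes f :: "'a::euclidean_space \<Rightarrow> 'b::euclidean_space"
  assumes "linear f" shows "\<exists>K\<ge>0. \<forall>u. norm (f u) \<le> K * norm u"
proof -
  obtain B where B: "\<And>u. norm (f u) \<le> B * norm u" using linear_bounded[OF assms] by blast
  have "norm (f u) \<le> max B 0 * norm u" for u using B[of u] by (smt (verit) mult_right_mono norm_ge_zero)
  thus ?thesis by (intro exI[of _ "max B 0"]) auto
qed

lemma norm3:
  fixes n K a b c :: real
  assumes "0 \<le> K" "0 \<le> n" "n \<le> K * (a + b + c)" "0 \<le> a" "0 \<le> b" "0 \<le> c"
  shows "n\<^sup>2 \<le> 3 * K\<^sup>2 * (a\<^sup>2 + b\<^sup>2 + c\<^sup>2)"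
proof -
  have "n\<^sup>2 \<le> (K * (a + b + c))\<^sup>2" using assms by (intro power_mono) auto
  also have "\<dots> = K\<^sup>2 * (a + b + c)\<^sup>2" by (simp add: power_mult_distrib)
  also have "\<dots> \<le> K\<^sup>2 * (3 * (a\<^sup>2 + b\<^sup>2 + c\<^sup>2))"
  proof (rule mult_left_mono)
    have "0 \<le> (a - b)\<^sup>2 + (b - c)\<^sup>2 + (a - c)\<^sup>2" by simp
    thus "(a + b + c)\<^sup>2 \<le> 3 * (a\<^sup>2 + b\<^sup>2 + c\<^sup>2)" by (simp add: power2_eq_square algebra_simps)
  qed simp
  finally show ?thesis by (simp add: algebra_simps)
qed

context admm_kkt begin

definition "e0 j = (norm (x (Suc j) - x j))\<^sup>2 + (norm (y (Suc j) - y j))\<^sup>2 + (norm (r (Suc j)))\<^sup>2"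

lemma e0_nn: "0 \<le> e0 j" unfolding e0_def by simp

lemma e0_summable: "summable e0"
proof -
  have "ee = (\<lambda>j. e0 (Suc j))" by (auto simp: ee_def e0_def)
  thus ?thesis using ee_summable summable_Suc_iff by metis
qed

lemma z_step_r: "z (Suc k) = z k + (\<tau> * \<sigma>) *\<^sub>R r (Suc k)" unfolding r_def by (rule z_step)

lemma rho_x: "vx i + gf (x (Suc i)) + A (z (Suc i)) = (gf (x (Suc i)) - gf (x i)) - Gx (x (Suc i) - x i)
   + ((\<tau> - 1) * \<sigma>) *\<^sub>R A (r (Suc i)) + \<sigma> *\<^sub>R A (Bt (y (Suc i) - y i))"
proof -
  have w: "At (x (Suc i)) + (Bt (y i) - c) = r (Suc i) - Bt (y (Suc i) - y i)"
    unfolding r_def linear_diff[OF linBt] by (simp add: algebra_simps)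
  show ?thesis unfolding vx_def w z_step_r
    by (simp add: linear_add[OF A_lin] linear_diff[OF A_lin] linear_scale[OF A_lin] algebra_simps)
qed

lemma rho_y: "vy i + gg (y (Suc i)) + B (z (Suc i)) = (gg (y (Suc i)) - gg (y i)) - Hy (y (Suc i) - y i)
   + ((\<tau> - 1) * \<sigma>) *\<^sub>R B (r (Suc i))"
  unfolding vy_def vy_r z_step_r
  by (simp add: linear_add[OF B_lin] linear_diff[OF B_lin] linear_scale[OF B_lin] algebra_simps)

lemma rho_bounds: "\<exists>C\<ge>0. \<forall>i. (norm (vx i + gf (x (Suc i)) + A (z (Suc i))))\<^sup>2 \<le> C * e0 i
   \<and> (norm (vy i + gg (y (Suc i)) + B (z (Suc i))))\<^sup>2 \<le> C * e0 i"
proof -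
  obtain Lf where Lf: "Lf-lipschitz_on UNIV gf" using gf_lip by blast
  obtain Lg where Lg: "Lg-lipschitz_on UNIV gg" using gg_lip by blast
  have Lf0: "0 \<le> Lf" by (rule lipschitz_on_nonneg[OF Lf])
  have Lg0: "0 \<le> Lg" by (rule lipschitz_on_nonneg[OF Lg])
  obtain KG where KG: "KG \<ge> 0" "\<And>u. norm (Gx u) \<le> KG * norm u" using lin_bound[OF sa_lin[OF SG]] by blast
  obtain KH where KH: "KH \<ge> 0" "\<And>u. norm (Hy u) \<le> KH * norm u" using lin_bound[OF sa_lin[OF SH]] by blast
  obtain KA where KA: "KA \<ge> 0" "\<And>u. norm (A u) \<le> KA * norm u" using lin_bound[OF A_lin] by blast
  obtain KB where KB: "KB \<ge> 0" "\<And>u. norm (B u) \<le> KB * norm u" using lin_bound[OF B_lin] by blast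
  obtain KAB where KAB: "KAB \<ge> 0" "\<And>u. norm (A (Bt u)) \<le> KAB * norm u"
    using lin_bound[OF linear_compose[OF linBt A_lin, unfolded o_def]] by blast
  define Kx where "Kx = Lf + KG + \<bar>\<tau> - 1\<bar> * \<sigma> * KA + \<sigma> * KAB"
  define Ky where "Ky = Lg + KH + \<bar>\<tau> - 1\<bar> * \<sigma> * KB"
  have Kx0: "0 \<le> Kx" unfolding Kx_def using Lf0 KG KA KAB \<sigma> by simp
  have Ky0: "0 \<le> Ky" unfolding Ky_def using Lg0 KH KB \<sigma> by simp
  define C where "C = 3 * Kx\<^sup>2 + 3 * Ky\<^sup>2"
  have "(norm (vx i + gf (x (Suc i)) + A (z (Suc i))))\<^sup>2 \<le> C * e0 i
     \<and> (norm (vy i + gg (y (Suc i)) + B (z (Suc i))))\<^sup>2 \<le> C * e0 i" for i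
  proof -
    define a where "a = norm (x (Suc i) - x i)"
    define b where "b = norm (y (Suc i) - y i)"
    define d where "d = norm (r (Suc i))"
    have e: "e0 i = a\<^sup>2 + b\<^sup>2 + d\<^sup>2" unfolding e0_def a_def b_def d_def ..
    have g1: "norm (gf (x (Suc i)) - gf (x i)) \<le> Lf * a"
      using lipschitz_onD[OF Lf, of "x (Suc i)" "x i"] by (simp add: dist_norm a_def)
    have g2: "norm (gg (y (Suc i)) - gg (y i)) \<le> Lg * b"
      using lipschitz_onD[OF Lg, of "y (Suc i)" "y i"] by (simp add: dist_norm b_def)
    have t1: "norm (((\<tau> - 1) * \<sigma>) *\<^sub>R A (r (Suc i))) \<le> \<bar>\<tau> - 1\<bar> * \<sigma> * KA * d"
    proof -
      have "norm (((\<tau> - 1) * \<sigma>) *\<^sub>R A (r (Suc i))) = \<bar>\<tau> - 1\<bar> * \<sigma> * norm (A (r (Suc i)))"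
        using \<sigma> by (simp add: abs_mult)
      also have "\<dots> \<le> \<bar>\<tau> - 1\<bar> * \<sigma> * (KA * d)" unfolding d_def
        by (rule mult_left_mono[OF KA(2)]) (use \<sigma> in simp)
      finally show ?thesis by simp
    qed
    have t1y: "norm (((\<tau> - 1) * \<sigma>) *\<^sub>R B (r (Suc i))) \<le> \<bar>\<tau> - 1\<bar> * \<sigma> * KB * d"
    proof -
      have "norm (((\<tau> - 1) * \<sigma>) *\<^sub>R B (r (Suc i))) = \<bar>\<tau> - 1\<bar> * \<sigma> * norm (B (r (Suc i)))"
        using \<sigma> by (simp add: abs_mult)
      also have "\<dots> \<le> \<bar>\<tau> - 1\<bar> * \<sigma> * (KB * d)" unfolding d_def
        by (rule mult_left_mono[OF KB(2)]) (use \<sigma> in simp)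
      finally show ?thesis by simp
    qed
    have t2: "norm (\<sigma> *\<^sub>R A (Bt (y (Suc i) - y i))) \<le> \<sigma> * KAB * b"
    proof -
      have "norm (\<sigma> *\<^sub>R A (Bt (y (Suc i) - y i))) = \<sigma> * norm (A (Bt (y (Suc i) - y i)))"
        using \<sigma> by simp
      also have "\<dots> \<le> \<sigma> * (KAB * b)" unfolding b_def
        by (rule mult_left_mono[OF KAB(2)]) (use \<sigma> in simp)
      finally show ?thesis by simp
    qed
    have t3: "norm (Gx (x (Suc i) - x i)) \<le> KG * a" unfolding a_def by (rule KG(2))
    have t3y: "norm (Hy (y (Suc i) - y i)) \<le> KH * b" unfolding b_def by (rule KH(2))
    have nx: "norm (vx i + gf (x (Suc i)) + A (z (Suc i))) \<le> Kx * (a + b + d)"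
    proof -
      have "norm (vx i + gf (x (Suc i)) + A (z (Suc i))) \<le> norm (gf (x (Suc i)) - gf (x i))
        + norm (Gx (x (Suc i) - x i)) + norm (((\<tau> - 1) * \<sigma>) *\<^sub>R A (r (Suc i)))
        + norm (\<sigma> *\<^sub>R A (Bt (y (Suc i) - y i)))"
        unfolding rho_x by (intro norm_triangle_le add_mono norm_triangle_ineq4 order_refl)
      also have "\<dots> \<le> Lf * a + KG * a + \<bar>\<tau> - 1\<bar> * \<sigma> * KA * d + \<sigma> * KAB * b"
        using g1 t3 t1 t2 by linarith
      also have "\<dots> \<le> Kx * (a + b + d)"
      proof -
        have "0 \<le> a" "0 \<le> b" "0 \<le> d" unfolding a_def b_def d_def by auto
        hence "0 \<le> (Lf + KG) * (b + d) + \<bar>\<tau> - 1\<bar> * \<sigma> * KA * (a + b) + \<sigma> * KAB * (a + d)"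
          using Lf0 KG KA KAB \<sigma> by (intro add_nonneg_nonneg mult_nonneg_nonneg) auto
        thus ?thesis unfolding Kx_def by (simp add: algebra_simps)
      qed
      finally show ?thesis .
    qed
    have ny: "norm (vy i + gg (y (Suc i)) + B (z (Suc i))) \<le> Ky * (a + b + d)"
    proof -
      have "norm (vy i + gg (y (Suc i)) + B (z (Suc i))) \<le> norm (gg (y (Suc i)) - gg (y i))
        + norm (Hy (y (Suc i) - y i)) + norm (((\<tau> - 1) * \<sigma>) *\<^sub>R B (r (Suc i)))"
        unfolding rho_y by (intro norm_triangle_le add_mono norm_triangle_ineq4 order_refl)
      also have "\<dots> \<le> Lg * b + KH * b + \<bar>\<tau> - 1\<bar> * \<sigma> * KB * d"
        using g2 t3y t1y by linarith
      also have "\<dots> \<le> Ky * (a + b + d)"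
      proof -
        have "0 \<le> a" "0 \<le> b" "0 \<le> d" unfolding a_def b_def d_def by auto
        hence "0 \<le> (Lg + KH) * (a + d) + \<bar>\<tau> - 1\<bar> * \<sigma> * KB * (a + b)"
          using Lg0 KH KB \<sigma> by (intro add_nonneg_nonneg mult_nonneg_nonneg) auto
        thus ?thesis unfolding Ky_def by (simp add: algebra_simps)
      qed
      finally show ?thesis .
    qed
    have abd: "0 \<le> a" "0 \<le> b" "0 \<le> d" unfolding a_def b_def d_def by auto
    have sx: "(norm (vx i + gf (x (Suc i)) + A (z (Suc i))))\<^sup>2 \<le> 3 * Kx\<^sup>2 * e0 i"
      unfolding e by (rule norm3[OF Kx0 norm_ge_zero nx abd])
    have sy: "(norm (vy i + gg (y (Suc i)) + B (z (Suc i))))\<^sup>2 \<le> 3 * Ky\<^sup>2 * e0 i"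
      unfolding e by (rule norm3[OF Ky0 norm_ge_zero ny abd])
    have "3 * Kx\<^sup>2 * e0 i \<le> C * e0 i" "3 * Ky\<^sup>2 * e0 i \<le> C * e0 i"
      unfolding C_def using e0_nn[of i] by (auto intro!: mult_right_mono)
    thus ?thesis using sx sy by linarith
  qed
  moreover have "0 \<le> C" unfolding C_def by simp
  ultimately show ?thesis by blast
qed

end

context admm_kkt begin

lemma res_bound: "\<exists>C>0. \<forall>i. (infdist 0 ((\<lambda>v. v + gf (x (Suc i)) + A (z (Suc i))) ` subdiff p (x (Suc i))))\<^sup>2
       + (infdist 0 ((\<lambda>w. w + gg (y (Suc i)) + B (z (Suc i))) ` subdiff q (y (Suc i))))\<^sup>2
       + (norm (adjoint A (x (Suc i)) + adjoint B (y (Suc i)) - c))\<^sup>2 \<le> C * e0 i"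
proof -
  obtain C where C: "C \<ge> 0" "\<And>i. (norm (vx i + gf (x (Suc i)) + A (z (Suc i))))\<^sup>2 \<le> C * e0 i"
     "\<And>i. (norm (vy i + gg (y (Suc i)) + B (z (Suc i))))\<^sup>2 \<le> C * e0 i" using rho_bounds by blast
  have "(infdist 0 ((\<lambda>v. v + gf (x (Suc i)) + A (z (Suc i))) ` subdiff p (x (Suc i))))\<^sup>2
       + (infdist 0 ((\<lambda>w. w + gg (y (Suc i)) + B (z (Suc i))) ` subdiff q (y (Suc i))))\<^sup>2
       + (norm (adjoint A (x (Suc i)) + adjoint B (y (Suc i)) - c))\<^sup>2 \<le> (2*C + 1) * e0 i" for i
  proof -
    have i1: "infdist 0 ((\<lambda>v. v + gf (x (Suc i)) + A (z (Suc i))) ` subdiff p (x (Suc i)))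
        \<le> norm (vx i + gf (x (Suc i)) + A (z (Suc i)))"
      using infdist_le[OF imageI[OF vx_sub[of i]], of 0 "\<lambda>v. v + gf (x (Suc i)) + A (z (Suc i))"]
      by (simp only: dist_0_norm)
    have i2: "infdist 0 ((\<lambda>w. w + gg (y (Suc i)) + B (z (Suc i))) ` subdiff q (y (Suc i)))
        \<le> norm (vy i + gg (y (Suc i)) + B (z (Suc i)))"
      using infdist_le[OF imageI[OF vy_sub[of i]], of 0 "\<lambda>w. w + gg (y (Suc i)) + B (z (Suc i))"]
      by (simp only: dist_0_norm)
    have s1: "(infdist 0 ((\<lambda>v. v + gf (x (Suc i)) + A (z (Suc i))) ` subdiff p (x (Suc i))))\<^sup>2 \<le> C * e0 i"
      using power_mono[OF i1 infdist_nonneg, of 2] C(2)[of i] by linarith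
    have s2: "(infdist 0 ((\<lambda>w. w + gg (y (Suc i)) + B (z (Suc i))) ` subdiff q (y (Suc i))))\<^sup>2 \<le> C * e0 i"
      using power_mono[OF i2 infdist_nonneg, of 2] C(3)[of i] by linarith
    have s3: "(norm (adjoint A (x (Suc i)) + adjoint B (y (Suc i)) - c))\<^sup>2 \<le> e0 i"
      unfolding e0_def r_def by simp
    have "(2*C + 1) * e0 i = C * e0 i + C * e0 i + e0 i" by (simp add: algebra_simps)
    thus ?thesis using s1 s2 s3 by linarith
  qed
  moreover have "0 < 2*C + 1" using C(1) by simp
  ultimately show ?thesis by blast
qed

lemma part1: "(\<lambda>k. Min ((\<lambda>i. (infdist 0 ((\<lambda>v. v + gf (x (Suc i)) + A (z (Suc i))) ` subdiff p (x (Suc i))))\<^sup>2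
                       + (infdist 0 ((\<lambda>w. w + gg (y (Suc i)) + B (z (Suc i))) ` subdiff q (y (Suc i))))\<^sup>2
                       + (norm (adjoint A (x (Suc i)) + adjoint B (y (Suc i)) - c))\<^sup>2) ` {1..k}))
           \<in> o(\<lambda>k. 1 / real k)"
proof -
  define res where "res i = (infdist 0 ((\<lambda>v. v + gf (x (Suc i)) + A (z (Suc i))) ` subdiff p (x (Suc i))))\<^sup>2
                       + (infdist 0 ((\<lambda>w. w + gg (y (Suc i)) + B (z (Suc i))) ` subdiff q (y (Suc i))))\<^sup>2
                       + (norm (adjoint A (x (Suc i)) + adjoint B (y (Suc i)) - c))\<^sup>2" for i
  obtain C where C: "C > 0" "\<And>i. res i \<le> C * e0 i" using res_bound unfolding res_def by blast
  have rnn: "0 \<le> res i" for i unfolding res_def by simp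
  have "(\<lambda>k. Min (res ` {1..k})) \<in> o(\<lambda>k. 1 / real k)"
  proof (rule landau_o.smallI)
    fix c :: real assume c: "c > 0"
    have ev: "eventually (\<lambda>k. \<exists>i\<in>{1..k}. e0 i \<le> (c / C) / real k) sequentially"
      by (rule min_rate[OF e0_nn e0_summable]) (use c C in simp)
    show "eventually (\<lambda>k. norm (Min (res ` {1..k})) \<le> c * norm (1 / real k)) sequentially"
      using ev
    proof eventually_elim
      case (elim k)
      then obtain i where i: "i \<in> {1..k}" "e0 i \<le> (c / C) / real k" by blast
      have ne: "res ` {1..k} \<noteq> {}" using i by auto
      have m0: "0 \<le> Min (res ` {1..k})" using ne rnn by (simp)
      have "Min (res ` {1..k}) \<le> res i" using i by (intro Min_le) auto
      also have "\<dots> \<le> C * e0 i" by (rule C(2))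
      also have "\<dots> \<le> C * ((c / C) / real k)" by (rule mult_left_mono[OF i(2)]) (use C in simp)
      also have "\<dots> = c / real k" using C by simp
      finally show ?case using m0 by simp
    qed
  qed
  thus ?thesis unfolding res_def .
qed

end

lemma le_one_plus_sq: "(n::real) \<le> 1 + n\<^sup>2"
proof -
  have "0 \<le> (n - 1/2)\<^sup>2 + 3/4" by (simp add: add_nonneg_nonneg)
  thus ?thesis by (simp add: power2_eq_square algebra_simps)
qed

context admm_kkt begin

lemma E_mono: "E (Suc j) \<le> E 1"
proof -
  obtain \<mu> where \<mu>: "\<mu> > 0" "\<And>j. \<mu> * ee j \<le> E (Suc j) - E (Suc (Suc j))" using coerc by blast
  have nn: "0 \<le> \<mu> * ee j" for j using \<mu>(1) by (simp add: ee_def)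
  have st: "E (Suc (Suc j)) \<le> E (Suc j)" for j using nn[of j] \<mu>(2)[of j] by linarith
  show ?thesis by (induction j) (use st in \<open>auto intro: order_trans\<close>)
qed

lemma Hf_coerc: "\<exists>m>0. \<forall>u. m * (norm u)\<^sup>2 \<le> qf Gx u + \<sigma> * (norm (At u))\<^sup>2"
proof -
  have l2: "linear (\<lambda>u. (1/2) *\<^sub>R Sf u + S u + ((1 - \<alpha>) * \<sigma> / 2) *\<^sub>R A (At u))"
    by (rule lin3[OF sa_lin[OF Sf(1)] sa_lin[OF S] linear_compose[OF linAt A_lin, unfolded o_def]])
  obtain m1 where m1: "m1 > 0" "\<And>u. m1 * (norm u)\<^sup>2 \<le> qf Sf u/2 + qf S u + (1-\<alpha>)*\<sigma>/2*(norm (At u))\<^sup>2"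
    using pd_coercive[OF l2 cond2] by (auto simp: qf_def inner_add_right qfAA)
  have "qf Sf u/2 + qf S u + (1-\<alpha>)*\<sigma>/2*(norm (At u))\<^sup>2 \<le> qf Gx u + \<sigma> * (norm (At u))\<^sup>2" for u
  proof -
    have a: "qf Sf u \<le> qf Shf u" using Shf(2) unfolding psd_def by (simp add: qf_def inner_diff_right)
    have b: "0 \<le> qf Sf u" using Sf(2) by (simp add: psd_def)
    have c: "(1-\<alpha>)*\<sigma>/2*(norm (At u))\<^sup>2 \<le> \<sigma> * (norm (At u))\<^sup>2"
      by (rule mult_right_mono) (use alpha_pos \<sigma> in auto)
    show ?thesis using a b c qf_plus[of Shf S u] by linarith
  qed
  thus ?thesis using m1 by (meson order_trans)
qed

lemma Mg_coerc: "\<exists>m>0. \<forall>u. m * (norm u)\<^sup>2 \<le> qf Hy u + \<sigma> * (norm (Bt u))\<^sup>2"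
proof -
  have l4: "linear (\<lambda>v. (1/2) *\<^sub>R Sg v + T v + (min \<tau> (1 + \<tau> - \<tau>\<^sup>2) * \<alpha> * \<sigma>) *\<^sub>R B (Bt v))"
    by (rule lin3[OF sa_lin[OF Sg(1)] sa_lin[OF T] linear_compose[OF linBt B_lin, unfolded o_def]])
  obtain m2 where m2: "m2 > 0" "\<And>u. m2 * (norm u)\<^sup>2 \<le> qf Sg u/2 + qf T u + (1-\<delta>c)*\<alpha>*\<sigma>*(norm (Bt u))\<^sup>2"
    using pd_coercive[OF l4 cond4] by (auto simp: qf_def inner_add_right qfBB delta_min)
  have d0: "0 \<le> \<delta>c" unfolding \<delta>c_def using \<tau>(1) by auto
  have "qf Sg u/2 + qf T u + (1-\<delta>c)*\<alpha>*\<sigma>*(norm (Bt u))\<^sup>2 \<le> qf Hy u + \<sigma> * (norm (Bt u))\<^sup>2" for u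
  proof -
    have a: "qf Sg u \<le> qf Shg u" by (rule qfShg_Sg)
    have b: "0 \<le> qf Sg u" using Sg(2) by (simp add: psd_def)
    have "(1-\<delta>c)*\<alpha> \<le> 1"
    proof (cases "0 \<le> 1 - \<delta>c")
      case True show ?thesis by (rule mult_le_one) (use d0 \<alpha>(2) alpha_pos in auto)
    next
      case False
      hence "(1-\<delta>c)*\<alpha> \<le> 0" using alpha_pos by (intro mult_nonpos_nonneg) auto
      thus ?thesis by simp
    qed
    hence "((1-\<delta>c)*\<alpha>)*(\<sigma>*(norm (Bt u))\<^sup>2) \<le> 1 * (\<sigma>*(norm (Bt u))\<^sup>2)"
      by (rule mult_right_mono) (use \<sigma> in simp)
    hence c: "(1-\<delta>c)*\<alpha>*\<sigma>*(norm (Bt u))\<^sup>2 \<le> \<sigma> * (norm (Bt u))\<^sup>2" by (simp add: mult.assoc)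
    show ?thesis using a b c qf_plus[of Shg T u] by linarith
  qed
  thus ?thesis using m2 by (meson order_trans)
qed

end

context admm_kkt begin

lemma iter_bounded: "\<exists>M\<ge>0. \<forall>j. norm (x (Suc j) - xb) \<le> M \<and> norm (y (Suc j) - yb) \<le> M \<and> norm (z (Suc j)) \<le> M"
proof -
  define E1 where "E1 = E 1"
  define S0 where "S0 = suminf e0"
  obtain m1 where m1: "m1 > 0" "\<And>u. m1 * (norm u)\<^sup>2 \<le> qf Gx u + \<sigma> * (norm (At u))\<^sup>2" using Hf_coerc by blast
  obtain m2 where m2: "m2 > 0" "\<And>u. m2 * (norm u)\<^sup>2 \<le> qf Hy u + \<sigma> * (norm (Bt u))\<^sup>2" using Mg_coerc by blast
  have E10: "0 \<le> E1" unfolding E1_def by (rule E_nn)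
  have S00: "0 \<le> S0" unfolding S0_def using e0_summable e0_nn by (simp add: suminf_nonneg)
  define Qx where "Qx = (6*E1 + 2*\<sigma>*S0)/m1"
  define Qy where "Qy = 4*E1/m2"
  define M where "M = (1 + Qx) + (1 + Qy) + (norm zb + 1 + 2*\<tau>*\<sigma>*E1)"
  have Qx0: "0 \<le> Qx" unfolding Qx_def using E10 S00 \<sigma> m1 by simp
  have Qy0: "0 \<le> Qy" unfolding Qy_def using E10 m2 by simp
  have ts: "0 < 2*\<tau>*\<sigma>" using \<tau>(1) \<sigma> by simp
  have "norm (x (Suc j) - xb) \<le> M \<and> norm (y (Suc j) - yb) \<le> M \<and> norm (z (Suc j)) \<le> M" for j
  proof -
    define xe where "xe = x (Suc j) - xb"
    define ye where "ye = y (Suc j) - yb"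
    have Ej: "E (Suc j) \<le> E1" unfolding E1_def by (rule E_mono)
    have t1: "0 \<le> (norm (z (Suc j) - zb))\<^sup>2/(2*\<tau>*\<sigma>)" using ts by simp
    have t2: "0 \<le> qf Gx xe/2" using qfG_nn by simp
    have t3: "0 \<le> qf Hy ye/2" using qfH_nn by simp
    have t4: "0 \<le> \<sigma>/2*(norm (Bt ye))\<^sup>2" using \<sigma> by simp
    have t5: "0 \<le> \<alpha>/2*qf Hy (y (Suc j) - y j)" using alpha_pos qfH_nn by simp
    have t6: "0 \<le> \<kappa>*(norm (r (Suc j)))\<^sup>2" using kappa_nn by simp
    have Eeq: "E (Suc j) = (norm (z (Suc j) - zb))\<^sup>2/(2*\<tau>*\<sigma>) + qf Gx xe/2 + qf Hy ye/2
       + \<sigma>/2*(norm (Bt ye))\<^sup>2 + \<alpha>/2*qf Hy (y (Suc j) - y j) + \<kappa>*(norm (r (Suc j)))\<^sup>2"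
      unfolding E_def xe_def ye_def by simp
    have hz0: "(norm (z (Suc j) - zb))\<^sup>2/(2*\<tau>*\<sigma>) \<le> E1" using Ej Eeq t1 t2 t3 t4 t5 t6 by linarith
    hence hz: "(norm (z (Suc j) - zb))\<^sup>2 \<le> 2*\<tau>*\<sigma>*E1" using ts by (simp add: divide_le_eq mult.commute)
    have hx: "qf Gx xe \<le> 2*E1" using Ej Eeq t1 t2 t3 t4 t5 t6 by linarith
    have hy: "qf Hy ye \<le> 2*E1" using Ej Eeq t1 t2 t3 t4 t5 t6 by linarith
    have hb: "\<sigma>*(norm (Bt ye))\<^sup>2 \<le> 2*E1" using Ej Eeq t1 t2 t3 t4 t5 t6 by linarith
    have hr: "(norm (r (Suc j)))\<^sup>2 \<le> S0"
    proof -
      have "(norm (r (Suc j)))\<^sup>2 \<le> e0 j" unfolding e0_def by simp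
      also have "e0 j \<le> S0" unfolding S0_def
        using sum_le_suminf[OF e0_summable, of "{j}"] e0_nn by simp
      finally show ?thesis .
    qed
    have Axe: "At xe = r (Suc j) - Bt ye"
      unfolding xe_def ye_def r_def linear_diff[OF linAt] linear_diff[OF linBt] using kf by (simp add: algebra_simps)
    have nA: "(norm (At xe))\<^sup>2 \<le> 2*(norm (r (Suc j)))\<^sup>2 + 2*(norm (Bt ye))\<^sup>2"
    proof -
      have "0 \<le> (norm (r (Suc j) + Bt ye))\<^sup>2" by simp
      thus ?thesis unfolding Axe normsq_diff normsq_add by linarith
    qed
    have "\<sigma>*(norm (At xe))\<^sup>2 \<le> \<sigma>*(2*(norm (r (Suc j)))\<^sup>2 + 2*(norm (Bt ye))\<^sup>2)"
      by (rule mult_left_mono[OF nA]) (use \<sigma> in simp)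
    moreover have "\<sigma>*(norm (r (Suc j)))\<^sup>2 \<le> \<sigma>*S0" by (rule mult_left_mono[OF hr]) (use \<sigma> in simp)
    ultimately have sA: "\<sigma>*(norm (At xe))\<^sup>2 \<le> 2*\<sigma>*S0 + 4*E1" using hb by (simp add: algebra_simps)
    have "m1 * (norm xe)\<^sup>2 \<le> 6*E1 + 2*\<sigma>*S0" using m1(2)[of xe] hx sA by linarith
    hence nx: "(norm xe)\<^sup>2 \<le> Qx" unfolding Qx_def using m1(1) by (simp add: le_divide_eq mult.commute)
    have "m2 * (norm ye)\<^sup>2 \<le> 4*E1" using m2(2)[of ye] hy hb by linarith
    hence ny: "(norm ye)\<^sup>2 \<le> Qy" unfolding Qy_def using m2(1) by (simp add: le_divide_eq mult.commute)
    have bx: "norm xe \<le> 1 + Qx" using le_one_plus_sq[of "norm xe"] nx by linarith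
    have by': "norm ye \<le> 1 + Qy" using le_one_plus_sq[of "norm ye"] ny by linarith
    have bz: "norm (z (Suc j)) \<le> norm zb + 1 + 2*\<tau>*\<sigma>*E1"
    proof -
      have "norm (z (Suc j)) \<le> norm zb + norm (z (Suc j) - zb)" by (metis norm_triangle_sub add.commute)
      moreover have "norm (z (Suc j) - zb) \<le> 1 + (norm (z (Suc j) - zb))\<^sup>2" by (rule le_one_plus_sq)
      ultimately show ?thesis using hz by linarith
    qed
    have z0: "0 \<le> norm zb + 1 + 2*\<tau>*\<sigma>*E1" using ts E10 by simp
    show ?thesis unfolding xe_def[symmetric] ye_def[symmetric] M_def using bx by' bz Qx0 Qy0 z0 by linarith
  qed
  moreover have "0 \<le> M" unfolding M_def using Qx0 Qy0 ts E10 by simp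
  ultimately show ?thesis by blast
qed

end

lemma sqrt_bound: assumes "(a::real)\<^sup>2 \<le> C * e" "0 \<le> a" "0 \<le> C" "0 \<le> e" shows "a \<le> sqrt C * sqrt e"
proof -
  have "a = sqrt (a\<^sup>2)" using assms(2) by simp
  also have "\<dots> \<le> sqrt (C * e)" using assms(1) by (rule real_sqrt_le_mono)
  also have "\<dots> = sqrt C * sqrt e" by (simp add: real_sqrt_mult)
  finally show ?thesis .
qed

context admm_kkt begin

lemma obj_bound: "\<exists>K\<ge>0. \<forall>j. \<bar>(real_of_ereal (p (x (Suc j))) + f (x (Suc j)) + real_of_ereal (q (y (Suc j))) + g (y (Suc j)))
     - (real_of_ereal (p xb) + f xb + real_of_ereal (q yb) + g yb)\<bar> \<le> K * sqrt (e0 j)"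
proof -
  obtain M where M: "M \<ge> 0" "\<And>j. norm (x (Suc j) - xb) \<le> M \<and> norm (y (Suc j) - yb) \<le> M \<and> norm (z (Suc j)) \<le> M"
    using iter_bounded by blast
  obtain C where C: "C \<ge> 0" "\<And>i. (norm (vx i + gf (x (Suc i)) + A (z (Suc i))))\<^sup>2 \<le> C * e0 i"
     "\<And>i. (norm (vy i + gg (y (Suc i)) + B (z (Suc i))))\<^sup>2 \<le> C * e0 i" using rho_bounds by blast
  obtain pb where pb: "p xb = ereal pb" using kx p_nm[of xb] by (cases "p xb") (auto simp: subdiff_def)
  obtain qb where qb: "q yb = ereal qb" using ky q_nm[of yb] by (cases "q yb") (auto simp: subdiff_def)
  define K where "K = 2 * M * sqrt C + M + norm zb"
  have K0: "0 \<le> K" unfolding K_def using M(1) C(1) by simp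
  have "\<bar>(real_of_ereal (p (x (Suc j))) + f (x (Suc j)) + real_of_ereal (q (y (Suc j))) + g (y (Suc j)))
     - (real_of_ereal (p xb) + f xb + real_of_ereal (q yb) + g yb)\<bar> \<le> K * sqrt (e0 j)" for j
  proof -
    define x1 where "x1 = x (Suc j)"
    define y1 where "y1 = y (Suc j)"
    define z1 where "z1 = z (Suc j)"
    define rx where "rx = vx j + gf x1 + A z1"
    define ry where "ry = vy j + gg y1 + B z1"
    define r1 where "r1 = r (Suc j)"
    obtain px where px: "p x1 = ereal px" unfolding x1_def using x_fin[of j] p_nm by (cases "p (x (Suc j))") auto
    obtain qy where qy: "q y1 = ereal qy" unfolding y1_def using y_fin[of j] q_nm by (cases "q (y (Suc j))") auto
    have ux0: "p x1 + ereal (vx j \<bullet> (xb - x1)) \<le> p xb" using vx_sub[of j] unfolding x1_def subdiff_def by auto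
    have ux: "px + vx j \<bullet> (xb - x1) \<le> pb" using ux0 px pb by simp
    have uy0: "q y1 + ereal (vy j \<bullet> (yb - y1)) \<le> q yb" using vy_sub[of j] unfolding y1_def subdiff_def by auto
    have uy: "qy + vy j \<bullet> (yb - y1) \<le> qb" using uy0 qy qb by simp
    have lx0: "p xb + ereal ((- (gf xb + A zb)) \<bullet> (x1 - xb)) \<le> p x1" using kx unfolding subdiff_def by auto
    have lx: "pb + (- (gf xb + A zb)) \<bullet> (x1 - xb) \<le> px" using lx0 px pb by simp
    have ly0: "q yb + ereal ((- (gg yb + B zb)) \<bullet> (y1 - yb)) \<le> q y1" using ky unfolding subdiff_def by auto
    have ly: "qb + (- (gg yb + B zb)) \<bullet> (y1 - yb) \<le> qy" using ly0 qy qb by simp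
    have Sfn: "\<And>u. 0 \<le> qf Sf u" using Sf(2) by (simp add: psd_def)
    have Sgn: "\<And>u. 0 \<le> qf Sg u" using Sg(2) by (simp add: psd_def)
    have fu: "f x1 + (xb - x1) \<bullet> gf x1 \<le> f xb" using f_maj(1)[where u=xb and u'=x1] Sfn[of "xb - x1"] by linarith
    have fl: "f xb + (x1 - xb) \<bullet> gf xb \<le> f x1" using f_maj(1)[where u=x1 and u'=xb] Sfn[of "x1 - xb"] by linarith
    have gu: "g y1 + (yb - y1) \<bullet> gg y1 \<le> g yb" using g_maj(1)[where v=yb and v'=y1] Sgn[of "yb - y1"] by linarith
    have gl: "g yb + (y1 - yb) \<bullet> gg yb \<le> g y1" using g_maj(1)[where v=y1 and v'=yb] Sgn[of "y1 - yb"] by linarith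
    have rr: "At (x1 - xb) + Bt (y1 - yb) = r1"
      unfolding r1_def r_def x1_def y1_def linear_diff[OF linAt] linear_diff[OF linBt] using kf by (simp add: algebra_simps)
    have i1: "vx j \<bullet> (xb - x1) + (xb - x1) \<bullet> gf x1 = - (rx \<bullet> (x1 - xb)) + z1 \<bullet> At (x1 - xb)"
    proof -
      have a1: "vx j \<bullet> (xb - x1) = - (vx j \<bullet> (x1 - xb))" by (metis inner_minus_right minus_diff_eq)
      have a2: "(xb - x1) \<bullet> gf x1 = - (gf x1 \<bullet> (x1 - xb))" by (metis inner_minus_left minus_diff_eq inner_commute)
      have a3: "rx \<bullet> (x1 - xb) = vx j \<bullet> (x1 - xb) + gf x1 \<bullet> (x1 - xb) + z1 \<bullet> At (x1 - xb)"
        unfolding rx_def inner_add_left adj_l[OF A_lin] ..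
      show ?thesis using a1 a2 a3 by argo
    qed
    have i2: "vy j \<bullet> (yb - y1) + (yb - y1) \<bullet> gg y1 = - (ry \<bullet> (y1 - yb)) + z1 \<bullet> Bt (y1 - yb)"
    proof -
      have a1: "vy j \<bullet> (yb - y1) = - (vy j \<bullet> (y1 - yb))" by (metis inner_minus_right minus_diff_eq)
      have a2: "(yb - y1) \<bullet> gg y1 = - (gg y1 \<bullet> (y1 - yb))" by (metis inner_minus_left minus_diff_eq inner_commute)
      have a3: "ry \<bullet> (y1 - yb) = vy j \<bullet> (y1 - yb) + gg y1 \<bullet> (y1 - yb) + z1 \<bullet> Bt (y1 - yb)"
        unfolding ry_def inner_add_left adj_l[OF B_lin] ..
      show ?thesis using a1 a2 a3 by argo
    qed
    have i3: "(- (gf xb + A zb)) \<bullet> (x1 - xb) + (x1 - xb) \<bullet> gf xb = - (zb \<bullet> At (x1 - xb))"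
    proof -
      have "(- (gf xb + A zb)) \<bullet> (x1 - xb) = - (gf xb \<bullet> (x1 - xb)) - zb \<bullet> At (x1 - xb)"
        by (simp add: inner_add_left inner_diff_left adj_l[OF A_lin])
      moreover have "(x1 - xb) \<bullet> gf xb = gf xb \<bullet> (x1 - xb)" by (rule inner_commute)
      ultimately show ?thesis by argo
    qed
    have i4: "(- (gg yb + B zb)) \<bullet> (y1 - yb) + (y1 - yb) \<bullet> gg yb = - (zb \<bullet> Bt (y1 - yb))"
    proof -
      have "(- (gg yb + B zb)) \<bullet> (y1 - yb) = - (gg yb \<bullet> (y1 - yb)) - zb \<bullet> Bt (y1 - yb)"
        by (simp add: inner_add_left inner_diff_left adj_l[OF B_lin])
      moreover have "(y1 - yb) \<bullet> gg yb = gg yb \<bullet> (y1 - yb)" by (rule inner_commute)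
      ultimately show ?thesis by argo
    qed
    have i5: "z1 \<bullet> At (x1 - xb) + z1 \<bullet> Bt (y1 - yb) = z1 \<bullet> r1" unfolding rr[symmetric] by (simp add: inner_add_right)
    have i6: "zb \<bullet> At (x1 - xb) + zb \<bullet> Bt (y1 - yb) = zb \<bullet> r1" unfolding rr[symmetric] by (simp add: inner_add_right)
    define D where "D = (px + f x1 + qy + g y1) - (pb + f xb + qb + g yb)"
    have up: "D \<le> rx \<bullet> (x1 - xb) + ry \<bullet> (y1 - yb) - z1 \<bullet> r1"
      unfolding D_def using ux uy fu gu i1 i2 i5 by argo
    have lo: "- (zb \<bullet> r1) \<le> D"
      unfolding D_def using lx ly fl gl i3 i4 i6 by argo
    have c1: "\<bar>rx \<bullet> (x1 - xb)\<bar> \<le> norm rx * M"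
      using Cauchy_Schwarz_ineq2[of rx "x1 - xb"] mult_left_mono[of "norm (x1 - xb)" M "norm rx"] M(2)[of j]
      unfolding x1_def by simp
    have c2: "\<bar>ry \<bullet> (y1 - yb)\<bar> \<le> norm ry * M"
      using Cauchy_Schwarz_ineq2[of ry "y1 - yb"] mult_left_mono[of "norm (y1 - yb)" M "norm ry"] M(2)[of j]
      unfolding y1_def by simp
    have c3: "\<bar>z1 \<bullet> r1\<bar> \<le> M * norm r1"
      using Cauchy_Schwarz_ineq2[of z1 r1] mult_right_mono[of "norm z1" M "norm r1"] M(2)[of j]
      unfolding z1_def by simp
    have c4: "\<bar>zb \<bullet> r1\<bar> \<le> norm zb * norm r1" by (rule Cauchy_Schwarz_ineq2)
    have e0n: "0 \<le> e0 j" by (rule e0_nn)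
    have srx: "norm rx \<le> sqrt C * sqrt (e0 j)"
      by (rule sqrt_bound[OF _ norm_ge_zero C(1) e0n]) (use C(2)[of j] in \<open>simp add: rx_def x1_def z1_def\<close>)
    have sry: "norm ry \<le> sqrt C * sqrt (e0 j)"
      by (rule sqrt_bound[OF _ norm_ge_zero C(1) e0n]) (use C(3)[of j] in \<open>simp add: ry_def y1_def z1_def\<close>)
    have sr0: "norm r1 \<le> sqrt 1 * sqrt (e0 j)"
      by (rule sqrt_bound[OF _ norm_ge_zero _ e0n]) (auto simp: e0_def r1_def)
    hence sr: "norm r1 \<le> sqrt (e0 j)" by simp
    have "\<bar>D\<bar> \<le> norm rx * M + norm ry * M + M * norm r1 + norm zb * norm r1"
      using up lo c1 c2 c3 c4 by argo
    also have "\<dots> \<le> (sqrt C * sqrt (e0 j)) * M + (sqrt C * sqrt (e0 j)) * M + M * sqrt (e0 j) + norm zb * sqrt (e0 j)"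
      using srx sry sr M(1)
      by (intro add_mono mult_right_mono mult_left_mono) auto
    also have "\<dots> = K * sqrt (e0 j)" unfolding K_def by (simp add: algebra_simps)
    finally have "\<bar>D\<bar> \<le> K * sqrt (e0 j)" .
    thus ?thesis unfolding D_def x1_def[symmetric] y1_def[symmetric] px qy pb qb by simp
  qed
  thus ?thesis using K0 by blast
qed

end

context admm_kkt begin

lemma part2: "(\<lambda>k. Min ((\<lambda>i. \<bar>(real_of_ereal (p (x i)) + f (x i) + real_of_ereal (q (y i)) + g (y i))
                             - (real_of_ereal (p xb) + f xb + real_of_ereal (q yb) + g yb)\<bar>) ` {1..k}))
           \<in> o(\<lambda>k. 1 / sqrt (real k))"
proof -
  define dev where "dev i = \<bar>(real_of_ereal (p (x i)) + f (x i) + real_of_ereal (q (y i)) + g (y i))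
                             - (real_of_ereal (p xb) + f xb + real_of_ereal (q yb) + g yb)\<bar>" for i
  obtain K where K: "K \<ge> 0" "\<And>j. dev (Suc j) \<le> K * sqrt (e0 j)" using obj_bound unfolding dev_def by blast
  define a where "a i = e0 (i - 1)" for i
  have ann: "0 \<le> a i" for i unfolding a_def by (rule e0_nn)
  have asm: "summable a"
  proof -
    have "(\<lambda>n. a (Suc n)) = e0" by (auto simp: a_def)
    thus ?thesis using e0_summable summable_Suc_iff by metis
  qed
  have devb: "dev i \<le> K * sqrt (a i)" if "i \<ge> 1" for i
  proof -
    define j where "j = i - 1"
    have "i = Suc j" using that unfolding j_def by simp
    thus ?thesis using K(2)[of j] by (simp add: a_def)
  qed
  have "(\<lambda>k. Min (dev ` {1..k})) \<in> o(\<lambda>k. 1 / sqrt (real k))"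
  proof (rule landau_o.smallI)
    fix c :: real assume c: "c > 0"
    define c' where "c' = (c / (K + 1))\<^sup>2"
    have c'0: "0 < c'" unfolding c'_def using c K(1) by simp
    have ev: "eventually (\<lambda>k. \<exists>i\<in>{1..k}. a i \<le> c' / real k) sequentially"
      by (rule min_rate[OF ann asm c'0])
    show "eventually (\<lambda>k. norm (Min (dev ` {1..k})) \<le> c * norm (1 / sqrt (real k))) sequentially"
      using ev
    proof eventually_elim
      case (elim k)
      then obtain i where i: "i \<in> {1..k}" "a i \<le> c' / real k" by blast
      have kpos: "0 < real k" using i by simp
      have ne: "dev ` {1..k} \<noteq> {}" using i by auto
      have m0: "0 \<le> Min (dev ` {1..k})" using ne by (simp add: dev_def)
      have "Min (dev ` {1..k}) \<le> dev i" using i by (intro Min_le) auto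
      also have "\<dots> \<le> K * sqrt (a i)" using devb i by simp
      also have "\<dots> \<le> (K + 1) * sqrt (c' / real k)"
        by (intro mult_mono real_sqrt_le_mono i(2)) (use K(1) ann in auto)
      also have "sqrt (c' / real k) = (c / (K + 1)) / sqrt (real k)"
        unfolding c'_def using c K(1) by (simp add: real_sqrt_divide)
      also have "(K + 1) * ((c / (K + 1)) / sqrt (real k)) = c / sqrt (real k)"
        using K(1) by simp
      finally have "Min (dev ` {1..k}) \<le> c / sqrt (real k)" .
      thus ?case using m0 kpos by simp
    qed
  qed
  thus ?thesis unfolding dev_def .
qed

end

lemma K_convex:
  fixes L :: "'w::euclidean_space \<Rightarrow> 'z::euclidean_space" and \<phi> :: "'w \<Rightarrow> real"
  assumes L: "linear L" and D: "convex D"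
    and \<phi>c: "\<And>w1 w2 \<theta>. w1 \<in> D \<Longrightarrow> w2 \<in> D \<Longrightarrow> 0 \<le> \<theta> \<Longrightarrow> \<theta> \<le> 1 \<Longrightarrow>
             \<phi> ((1-\<theta>) *\<^sub>R w1 + \<theta> *\<^sub>R w2) \<le> (1-\<theta>) * \<phi> w1 + \<theta> * \<phi> w2"
  shows "convex {(L w - c, t) | w t. w \<in> D \<and> \<phi> w < t}"
proof (rule convexI)
  fix X Y and u v :: real
  assume X: "X \<in> {(L w - c, t) | w t. w \<in> D \<and> \<phi> w < t}" and Y: "Y \<in> {(L w - c, t) | w t. w \<in> D \<and> \<phi> w < t}"
    and uv: "0 \<le> u" "0 \<le> v" "u + v = 1"
  obtain w1 t1 where 1: "X = (L w1 - c, t1)" "w1 \<in> D" "\<phi> w1 < t1" using X by blast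
  obtain w2 t2 where 2: "Y = (L w2 - c, t2)" "w2 \<in> D" "\<phi> w2 < t2" using Y by blast
  have u: "u = 1 - v" using uv by simp
  define w where "w = u *\<^sub>R w1 + v *\<^sub>R w2"
  have wD: "w \<in> D" unfolding w_def by (rule convexD[OF D 1(2) 2(2) uv])
  have pw: "\<phi> w \<le> u * \<phi> w1 + v * \<phi> w2" unfolding w_def u using \<phi>c[OF 1(2) 2(2), of v] uv by simp
  have "u * \<phi> w1 + v * \<phi> w2 < u * t1 + v * t2"
  proof (cases "u = 0")
    case True hence "v = 1" using uv by simp
    thus ?thesis using True 2(3) by simp
  next
    case False hence "0 < u" using uv by simp
    hence "u * \<phi> w1 < u * t1" using 1(3) by simp
    moreover have "v * \<phi> w2 \<le> v * t2" using 2(3) uv(2) by (simp add: mult_left_mono)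
    ultimately show ?thesis by simp
  qed
  moreover have "u *\<^sub>R (L w1 - c) + v *\<^sub>R (L w2 - c) = L w - c"
    unfolding w_def linear_add[OF L] linear_scale[OF L] using uv by (simp add: algebra_simps u)
  ultimately have "u *\<^sub>R X + v *\<^sub>R Y = (L w - c, u * t1 + v * t2) \<and> w \<in> D \<and> \<phi> w < u * t1 + v * t2"
    using 1 2 wD pw by simp
  thus "u *\<^sub>R X + v *\<^sub>R Y \<in> {(L w - c, t) | w t. w \<in> D \<and> \<phi> w < t}" by blast
qed

lemma ri_epi:
  fixes L :: "'w::euclidean_space \<Rightarrow> 'z::euclidean_space" and \<phi> :: "'w \<Rightarrow> real"
  assumes L: "linear L" and D: "convex D" and w0: "w0 \<in> rel_interior D" and Lw0: "L w0 = c"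
    and \<phi>c: "\<And>w1 w2 \<theta>. w1 \<in> D \<Longrightarrow> w2 \<in> D \<Longrightarrow> 0 \<le> \<theta> \<Longrightarrow> \<theta> \<le> 1 \<Longrightarrow>
             \<phi> ((1-\<theta>) *\<^sub>R w1 + \<theta> *\<^sub>R w2) \<le> (1-\<theta>) * \<phi> w1 + \<theta> * \<phi> w2"
  shows "(0, \<phi> w0 + 1) \<in> rel_interior {(L w - c, t) | w t. w \<in> D \<and> \<phi> w < t}"
proof -
  let ?K = "{(L w - c, t) | w t. w \<in> D \<and> \<phi> w < t}"
  define t0 where "t0 = \<phi> w0 + 1"
  have w0D: "w0 \<in> D" using w0 rel_interior_subset by blast
  have ne: "?K \<noteq> {}" using w0D by (auto intro!: exI[of _ "\<phi> w0 + 1"])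
  have ex: "\<exists>e. e > 1 \<and> (1 - e) *\<^sub>R X + e *\<^sub>R (0, t0) \<in> ?K" if X: "X \<in> ?K" for X
  proof -
    obtain w t where Xw: "X = (L w - c, t)" "w \<in> D" "\<phi> w < t" using X by blast
    have "w \<in> affine hull D" by (rule hull_inc[OF Xw(2)])
    then obtain m where m: "m > 1" "\<And>e. e > 1 \<Longrightarrow> e \<le> m \<Longrightarrow> (1 - e) *\<^sub>R w + e *\<^sub>R w0 \<in> D"
      using convex_rel_interior_if[OF D w0] by blast
    define wm where "wm = (1 - m) *\<^sub>R w + m *\<^sub>R w0"
    have wmD: "wm \<in> D" unfolding wm_def using m by simp
    define \<Gamma> where "\<Gamma> = (t0 - t) - (\<phi> wm - \<phi> w0) / (m - 1)"
    define \<delta> where "\<delta> = min (m - 1) (1 / (2 * \<bar>\<Gamma>\<bar> + 1))"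
    have d0: "0 < \<delta>" unfolding \<delta>_def using m by simp
    have d1: "\<delta> \<le> m - 1" unfolding \<delta>_def by simp
    have d2: "\<delta> \<le> 1 / (2 * \<bar>\<Gamma>\<bar> + 1)" unfolding \<delta>_def by simp
    define e where "e = 1 + \<delta>"
    define l where "l = \<delta> / (m - 1)"
    have l01: "0 \<le> l" "l \<le> 1" unfolding l_def using d0 d1 m by auto
    have we: "(1 - e) *\<^sub>R w + e *\<^sub>R w0 = (1 - l) *\<^sub>R w0 + l *\<^sub>R wm"
    proof -
      have lm: "l * (m - 1) = \<delta>" unfolding l_def using m by simp
      have "(1 - l) *\<^sub>R w0 + l *\<^sub>R wm = (1 - l + l * m) *\<^sub>R w0 + (l * (1 - m)) *\<^sub>R w"
        unfolding wm_def by (simp add: algebra_simps)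
      moreover have "1 - l + l * m = e" using lm unfolding e_def by (simp add: algebra_simps)
      moreover have "l * (1 - m) = 1 - e" using lm unfolding e_def by (simp add: algebra_simps)
      ultimately show ?thesis by (simp add: add.commute)
    qed
    have weD: "(1 - e) *\<^sub>R w + e *\<^sub>R w0 \<in> D" using m(2)[of e] d0 d1 unfolding e_def by simp
    have phe: "\<phi> ((1 - e) *\<^sub>R w + e *\<^sub>R w0) \<le> \<phi> w0 + \<delta> * ((\<phi> wm - \<phi> w0) / (m - 1))"
    proof -
      have "\<phi> ((1 - l) *\<^sub>R w0 + l *\<^sub>R wm) \<le> (1 - l) * \<phi> w0 + l * \<phi> wm" by (rule \<phi>c[OF w0D wmD l01])
      also have "\<dots> = \<phi> w0 + \<delta> * ((\<phi> wm - \<phi> w0) / (m - 1))" unfolding l_def by (simp add: algebra_simps diff_divide_distrib)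
      finally show ?thesis unfolding we .
    qed
    have sec: "(1 - e) * t + e * t0 = t0 + \<delta> * (t0 - t)" unfolding e_def by (simp add: algebra_simps)
    have "\<delta> * \<bar>\<Gamma>\<bar> \<le> 1/2"
    proof -
      have "\<delta> * \<bar>\<Gamma>\<bar> \<le> (1 / (2 * \<bar>\<Gamma>\<bar> + 1)) * \<bar>\<Gamma>\<bar>" by (rule mult_right_mono[OF d2]) simp
      also have "\<dots> \<le> 1/2" by (simp add: field_simps)
      finally show ?thesis .
    qed
    moreover have "- (\<delta> * \<bar>\<Gamma>\<bar>) \<le> \<delta> * \<Gamma>"
    proof -
      have "\<delta> * (- \<bar>\<Gamma>\<bar>) \<le> \<delta> * \<Gamma>" by (rule mult_left_mono) (use d0 in auto)
      thus ?thesis by simp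
    qed
    ultimately have "- 1/2 \<le> \<delta> * \<Gamma>" by linarith
    moreover have "\<delta> * \<Gamma> = \<delta> * (t0 - t) - \<delta> * ((\<phi> wm - \<phi> w0) / (m - 1))" unfolding \<Gamma>_def by (simp add: algebra_simps)
    ultimately have strict: "\<phi> ((1 - e) *\<^sub>R w + e *\<^sub>R w0) < (1 - e) * t + e * t0"
      using phe sec unfolding t0_def by linarith
    have first: "(1 - e) *\<^sub>R (L w - c) = L ((1 - e) *\<^sub>R w + e *\<^sub>R w0) - c"
      unfolding linear_add[OF L] linear_scale[OF L] Lw0 by (simp add: algebra_simps)
    have "(1 - e) *\<^sub>R X + e *\<^sub>R (0, t0) = (L ((1 - e) *\<^sub>R w + e *\<^sub>R w0) - c, (1 - e) * t + e * t0)"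
      unfolding Xw(1) using first by simp
    hence "(1 - e) *\<^sub>R X + e *\<^sub>R (0, t0) \<in> ?K" using weD strict by blast
    moreover have "e > 1" unfolding e_def using d0 by simp
    ultimately show ?thesis by (intro exI[of _ e]) simp
  qed
  have "(0, t0) \<in> rel_interior ?K"
  proof -
    have Kc: "convex ?K" using L D \<phi>c by (rule K_convex)
    show ?thesis by (rule convex_rel_interior_only_if[OF Kc ne]) (intro ballI, rule ex, assumption)
  qed
  thus ?thesis unfolding t0_def .
qed

lemma efun_dom_conv:
  assumes cv: "convex_efun h" and nm: "\<And>u. h u \<noteq> -\<infinity>" and a: "a \<in> edom h" and b: "b \<in> edom h"
    and t: "0 \<le> t" "t \<le> 1"
  shows "(1-t) *\<^sub>R a + t *\<^sub>R b \<in> edom h \<and>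
    real_of_ereal (h ((1-t) *\<^sub>R a + t *\<^sub>R b)) \<le> (1-t) * real_of_ereal (h a) + t * real_of_ereal (h b)"
proof -
  obtain ra where ra: "h a = ereal ra" using a nm[of a] by (cases "h a") (auto simp: edom_def)
  obtain rb where rb: "h b = ereal rb" using b nm[of b] by (cases "h b") (auto simp: edom_def)
  have le: "h ((1-t) *\<^sub>R a + t *\<^sub>R b) \<le> ereal ((1-t)*ra + t*rb)"
    by (rule efun_convex_ineq[OF cv]) (use ra rb t in auto)
  obtain rc where rc: "h ((1-t) *\<^sub>R a + t *\<^sub>R b) = ereal rc"
    using le nm[of "(1-t) *\<^sub>R a + t *\<^sub>R b"] by (cases "h ((1-t) *\<^sub>R a + t *\<^sub>R b)") auto
  show ?thesis using le rc ra rb by (simp add: edom_def)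
qed

lemma edom_convex:
  assumes cv: "convex_efun h" and nm: "\<And>u. h u \<noteq> -\<infinity>"
  shows "convex (edom h)"
proof (rule convexI)
  fix a b and u v :: real assume ab: "a \<in> edom h" "b \<in> edom h" and uv: "0 \<le> u" "0 \<le> v" "u + v = 1"
  have u: "u = 1 - v" using uv by simp
  show "u *\<^sub>R a + v *\<^sub>R b \<in> edom h" unfolding u using efun_dom_conv[OF cv nm ab, of v] uv by simp
qed

context admm begin

lemma kkt_exists: "\<exists>xb yb zb. - (gf xb + A zb) \<in> subdiff p xb \<and> - (gg yb + B zb) \<in> subdiff q yb
     \<and> adjoint A xb + adjoint B yb = c"
proof -
  obtain xs ys where fs: "adjoint A xs + adjoint B ys = c" and opt: "\<And>u v. adjoint A u + adjoint B v = c \<Longrightarrow>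
      p xs + ereal (f xs) + q ys + ereal (g ys) \<le> p u + ereal (f u) + q v + ereal (g v)" using sol by blast
  obtain x0 y0 where ri0: "(x0, y0) \<in> rel_interior (edom p \<times> edom q)" and f0: "adjoint A x0 + adjoint B y0 = c"
    using CQ by blast
  define D where "D = edom p \<times> edom q"
  have Dc: "convex D" unfolding D_def by (rule convex_Times[OF edom_convex[OF p_cv p_nm] edom_convex[OF q_cv q_nm]])
  have w0D: "(x0, y0) \<in> D" using ri0 rel_interior_subset unfolding D_def by blast
  obtain a0 where a0: "p x0 = ereal a0" using w0D p_nm[of x0] by (cases "p x0") (auto simp: D_def edom_def)
  obtain b0 where b0: "q y0 = ereal b0" using w0D q_nm[of y0] by (cases "q y0") (auto simp: D_def edom_def)
  have o0: "p xs + ereal (f xs) + q ys + ereal (g ys) \<le> ereal (a0 + f x0 + b0 + g y0)"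
    using opt[OF f0] a0 b0 by simp
  obtain ps where ps: "p xs = ereal ps"
  proof (cases "p xs")
    case (real r) thus ?thesis using that by simp
  next
    case PInf thus ?thesis using o0 q_nm[of ys] by (cases "q ys") auto
  next
    case MInf thus ?thesis using p_nm by simp
  qed
  obtain qs where qs: "q ys = ereal qs"
  proof (cases "q ys")
    case (real r) thus ?thesis using that by simp
  next
    case PInf thus ?thesis using o0 ps by simp
  next
    case MInf thus ?thesis using q_nm by simp
  qed
  define P where "P u = real_of_ereal (p u)" for u
  define Q where "Q v = real_of_ereal (q v)" for v
  define Fs where "Fs = ps + f xs + qs + g ys"
  define L where "L w = adjoint A (fst w) + adjoint B (snd w)" for w :: "'x \<times> 'y"
  define \<phi> where "\<phi> w = P (fst w) + f (fst w) + Q (snd w) + g (snd w) - Fs" for w :: "'x \<times> 'y"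
  have pP: "p u = ereal (P u)" if "u \<in> edom p" for u
    using that p_nm[of u] unfolding P_def edom_def by (cases "p u") auto
  have qQ: "q v = ereal (Q v)" if "v \<in> edom q" for v
    using that q_nm[of v] unfolding Q_def edom_def by (cases "q v") auto
  have linL: "linear L" unfolding linear_iff L_def
    by (simp add: linear_add[OF linAt] linear_add[OF linBt] linear_scale[OF linAt] linear_scale[OF linBt] scaleR_add_right)
  have \<phi>c: "\<phi> ((1-\<theta>) *\<^sub>R w1 + \<theta> *\<^sub>R w2) \<le> (1-\<theta>) * \<phi> w1 + \<theta> * \<phi> w2"
    if w: "w1 \<in> D" "w2 \<in> D" "0 \<le> \<theta>" "\<theta> \<le> 1" for w1 w2 \<theta>
  proof -
    have e1: "fst ((1-\<theta>) *\<^sub>R w1 + \<theta> *\<^sub>R w2) = (1-\<theta>) *\<^sub>R fst w1 + \<theta> *\<^sub>R fst w2" by simp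
    have e2: "snd ((1-\<theta>) *\<^sub>R w1 + \<theta> *\<^sub>R w2) = (1-\<theta>) *\<^sub>R snd w1 + \<theta> *\<^sub>R snd w2" by simp
    have pc: "P ((1-\<theta>) *\<^sub>R fst w1 + \<theta> *\<^sub>R fst w2) \<le> (1-\<theta>) * P (fst w1) + \<theta> * P (fst w2)"
      unfolding P_def using efun_dom_conv[OF p_cv p_nm _ _ w(3,4), of "fst w1" "fst w2"] w(1,2)
      by (auto simp: D_def)
    have qc: "Q ((1-\<theta>) *\<^sub>R snd w1 + \<theta> *\<^sub>R snd w2) \<le> (1-\<theta>) * Q (snd w1) + \<theta> * Q (snd w2)"
      unfolding Q_def using efun_dom_conv[OF q_cv q_nm _ _ w(3,4), of "snd w1" "snd w2"] w(1,2)
      by (auto simp: D_def)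
    have fc: "f ((1-\<theta>) *\<^sub>R fst w1 + \<theta> *\<^sub>R fst w2) \<le> (1-\<theta>) * f (fst w1) + \<theta> * f (fst w2)"
      by (rule convex_onD[OF f_conv w(3,4)]) auto
    have gc: "g ((1-\<theta>) *\<^sub>R snd w1 + \<theta> *\<^sub>R snd w2) \<le> (1-\<theta>) * g (snd w1) + \<theta> * g (snd w2)"
      by (rule convex_onD[OF g_conv w(3,4)]) auto
    have "(1-\<theta>) * \<phi> w1 + \<theta> * \<phi> w2 = ((1-\<theta>) * P (fst w1) + \<theta> * P (fst w2)) + ((1-\<theta>) * f (fst w1) + \<theta> * f (fst w2))
       + ((1-\<theta>) * Q (snd w1) + \<theta> * Q (snd w2)) + ((1-\<theta>) * g (snd w1) + \<theta> * g (snd w2)) - Fs"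
      unfolding \<phi>_def by (simp add: algebra_simps)
    thus ?thesis unfolding \<phi>_def e1 e2 using pc qc fc gc by linarith
  qed
  have optR: "0 \<le> \<phi> w" if "w \<in> D" "L w = c" for w
  proof -
    obtain u v where w: "w = (u, v)" by (cases w)
    have uv: "u \<in> edom p" "v \<in> edom q" using that(1) w by (auto simp: D_def)
    have "ereal Fs \<le> ereal (P u + f u + Q v + g v)"
      using opt[of u v] that(2) w ps qs pP[OF uv(1)] qQ[OF uv(2)] by (simp add: L_def Fs_def)
    thus ?thesis unfolding \<phi>_def w by simp
  qed
  have wsD: "(xs, ys) \<in> D" using ps qs by (simp add: D_def edom_def)
  have phis: "\<phi> (xs, ys) = 0" unfolding \<phi>_def P_def Q_def Fs_def using ps qs by simp
  have Lws: "L (xs, ys) - c = 0" unfolding L_def using fs by simp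
  let ?K = "{(L w - c, t) | w t. w \<in> D \<and> \<phi> w < t}"
  have Kc: "convex ?K" using linL Dc \<phi>c by (rule K_convex)
  have inK: "(L w - c, t) \<in> ?K" if "w \<in> D" "\<phi> w < t" for w t using that by blast
  have cl: "(0, 0) \<in> closure ?K"
    unfolding closure_approachable
  proof (intro allI impI)
    fix e :: real assume e: "e > 0"
    have "(0, e/2) \<in> ?K" using inK[OF wsD, of "e/2"] phis Lws e by simp
    moreover have "dist (0::'z, e/2) (0, 0) < e" using e by (simp add: dist_Pair_Pair)
    ultimately show "\<exists>y\<in>?K. dist y (0, 0) < e" by blast
  qed
  have nK: "(0, 0) \<notin> ?K"
  proof
    assume "(0, 0) \<in> ?K"
    then obtain w t where "(0, 0) = (L w - c, t)" "w \<in> D" "\<phi> w < t" by blast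
    thus False using optR[of w] by simp
  qed
  have nri: "(0, 0) \<notin> rel_interior ?K" using nK rel_interior_subset by blast
  obtain a where a: "a \<noteq> 0" "\<And>y. y \<in> closure ?K \<Longrightarrow> a \<bullet> (0, 0) \<le> a \<bullet> y"
      "\<And>y. y \<in> rel_interior ?K \<Longrightarrow> a \<bullet> (0, 0) < a \<bullet> y"
    using supporting_hyperplane_relative_frontier[OF Kc cl nri] by blast
  obtain \<zeta> \<eta> where aa: "a = (\<zeta>, \<eta>)" by (cases a)
  have sep: "0 \<le> \<zeta> \<bullet> (L w - c) + \<eta> * t" if "w \<in> D" "\<phi> w < t" for w t
    using a(2)[OF closure_subset[THEN subsetD, OF inK[OF that]]] aa by simp
  have ri: "(0, \<phi> (x0, y0) + 1) \<in> rel_interior ?K"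
    by (rule ri_epi[OF linL Dc]) (use ri0 f0 \<phi>c in \<open>auto simp: D_def L_def\<close>)
  have pos: "0 < \<eta> * (\<phi> (x0, y0) + 1)" using a(3)[OF ri] aa by simp
  have \<eta>0: "0 \<le> \<eta>" using sep[OF wsD, of 1] phis Lws by simp
  have \<eta>p: "0 < \<eta>" using pos \<eta>0 by (cases "\<eta> = 0") auto
  define zb where "zb = (1/\<eta>) *\<^sub>R \<zeta>"
  have lag: "0 \<le> zb \<bullet> (L w - c) + \<phi> w" if "w \<in> D" for w
  proof (rule ccontr)
    assume "\<not> ?thesis"
    hence neg: "zb \<bullet> (L w - c) + \<phi> w < 0" by simp
    define t where "t = \<phi> w - (zb \<bullet> (L w - c) + \<phi> w) / 2"
    have "\<phi> w < t" unfolding t_def using neg by simp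
    hence "0 \<le> \<zeta> \<bullet> (L w - c) + \<eta> * t" by (rule sep[OF that])
    hence "0 \<le> (\<zeta> \<bullet> (L w - c) + \<eta> * t) / \<eta>" using \<eta>p by simp
    also have "(\<zeta> \<bullet> (L w - c) + \<eta> * t) / \<eta> = zb \<bullet> (L w - c) + t"
      unfolding zb_def using \<eta>p by (simp add: field_simps)
    finally have "0 \<le> zb \<bullet> (L w - c) + t" .
    thus False unfolding t_def using neg by argo
  qed
  have kx: "- (gf xs + A zb) \<in> subdiff p xs"
  proof -
    define h where "h u = f u + A zb \<bullet> u" for u
    have mn: "p xs + ereal (h xs) \<le> p u + ereal (h u)" for u
    proof (cases "p u = \<infinity>")
      case True thus ?thesis using ps by simp
    next
      case False
      hence ud: "u \<in> edom p" by (simp add: edom_def)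
      have "(u, ys) \<in> D" using ud qs by (simp add: D_def edom_def)
      from lag[OF this] have l: "0 \<le> zb \<bullet> (adjoint A u + adjoint B ys - c) + (P u + f u + Q ys + g ys - Fs)"
        unfolding L_def \<phi>_def by simp
      have e1: "adjoint B ys - c = - adjoint A xs" using fs by (simp add: algebra_simps)
      have e2: "zb \<bullet> (adjoint A u + adjoint B ys - c) = A zb \<bullet> u - A zb \<bullet> xs"
        by (simp add: add_diff_eq[symmetric] e1 inner_add_right inner_diff_right inner_minus_right adj_l[OF A_lin])
      have "ps + h xs \<le> P u + h u" using l e2 unfolding h_def Fs_def Q_def qs by simp
      thus ?thesis using ps pP[OF ud] by simp
    qed
    show ?thesis
    proof (rule sub_of_min[OF p_cv p_nm, where h=h and C="\<lambda>d. qf Shf d / 2"])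
      show "p xs < \<infinity>" using ps by simp
      show "p xs + ereal (h xs) \<le> p u + ereal (h u)" for u by (rule mn)
      show "h (xs + t *\<^sub>R d) \<le> h xs + t * ((gf xs + A zb) \<bullet> d) + t\<^sup>2 * (qf Shf d / 2)" for t d
      proof -
        have "f (xs + t *\<^sub>R d) \<le> f xs + (xs + t *\<^sub>R d - xs) \<bullet> gf xs + qf Shf (xs + t *\<^sub>R d - xs) / 2"
          by (rule f_maj(2))
        also have "\<dots> = f xs + t * (d \<bullet> gf xs) + t\<^sup>2 * (qf Shf d / 2)"
          using qf_scale[OF sa_lin[OF Shf(1)], of t d] by simp
        finally show ?thesis unfolding h_def by (simp add: inner_add_right inner_add_left inner_commute algebra_simps)
      qed
    qed
  qed
  have ky: "- (gg ys + B zb) \<in> subdiff q ys"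
  proof -
    define h where "h v = g v + B zb \<bullet> v" for v
    have mn: "q ys + ereal (h ys) \<le> q v + ereal (h v)" for v
    proof (cases "q v = \<infinity>")
      case True thus ?thesis using qs by simp
    next
      case False
      hence vd: "v \<in> edom q" by (simp add: edom_def)
      have "(xs, v) \<in> D" using vd ps by (simp add: D_def edom_def)
      from lag[OF this] have l: "0 \<le> zb \<bullet> (adjoint A xs + adjoint B v - c) + (P xs + f xs + Q v + g v - Fs)"
        unfolding L_def \<phi>_def by simp
      have e1: "adjoint A xs - c = - adjoint B ys" using fs by (simp add: algebra_simps)
      have e2: "zb \<bullet> (adjoint A xs + adjoint B v - c) = B zb \<bullet> v - B zb \<bullet> ys"
      proof -
        have eq: "adjoint A xs + adjoint B v - c = adjoint B v + (adjoint A xs - c)" by (simp add: algebra_simps)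
        show ?thesis unfolding eq e1 by (simp add: inner_add_right inner_diff_right inner_minus_right adj_l[OF B_lin])
      qed
      have "qs + h ys \<le> Q v + h v" using l e2 unfolding h_def Fs_def P_def ps by simp
      thus ?thesis using qs qQ[OF vd] by simp
    qed
    show ?thesis
    proof (rule sub_of_min[OF q_cv q_nm, where h=h and C="\<lambda>d. qf Shg d / 2"])
      show "q ys < \<infinity>" using qs by simp
      show "q ys + ereal (h ys) \<le> q u + ereal (h u)" for u by (rule mn)
      show "h (ys + t *\<^sub>R d) \<le> h ys + t * ((gg ys + B zb) \<bullet> d) + t\<^sup>2 * (qf Shg d / 2)" for t d
      proof -
        have "g (ys + t *\<^sub>R d) \<le> g ys + (ys + t *\<^sub>R d - ys) \<bullet> gg ys + qf Shg (ys + t *\<^sub>R d - ys) / 2"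
          by (rule g_maj(2))
        also have "\<dots> = g ys + t * (d \<bullet> gg ys) + t\<^sup>2 * (qf Shg d / 2)"
          using qf_scale[OF sa_lin[OF Shg(1)], of t d] by simp
        finally show ?thesis unfolding h_def by (simp add: inner_add_right inner_add_left inner_commute algebra_simps)
      qed
    qed
  qed
  show ?thesis using kx ky fs by blast
qed

end

theorem theorem5p1:
  fixes p :: "'x::euclidean_space \<Rightarrow> ereal" and q :: "'y::euclidean_space \<Rightarrow> ereal"
    and f :: "'x \<Rightarrow> real" and g :: "'y \<Rightarrow> real"
    and gf :: "'x \<Rightarrow> 'x" and gg :: "'y \<Rightarrow> 'y"
    and A :: "'z::euclidean_space \<Rightarrow> 'x" and B :: "'z \<Rightarrow> 'y" and c :: 'z
    and Sf Shf S :: "'x \<Rightarrow> 'x" and Sg Shg T :: "'y \<Rightarrow> 'y"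
    and \<sigma> \<tau> \<alpha> :: real
    and x :: "nat \<Rightarrow> 'x" and y :: "nat \<Rightarrow> 'y" and z :: "nat \<Rightarrow> 'z"
  assumes p: "closed_proper_convex p" and q: "closed_proper_convex q"
    and f_conv: "convex_on UNIV f" and g_conv: "convex_on UNIV g"
    and f_grad: "\<And>u. (f has_derivative (\<lambda>h. gf u \<bullet> h)) (at u)"
    and g_grad: "\<And>u. (g has_derivative (\<lambda>h. gg u \<bullet> h)) (at u)"
    and gf_lip: "\<exists>L. L-lipschitz_on UNIV gf"
    and gg_lip: "\<exists>L. L-lipschitz_on UNIV gg"
    and A_lin: "linear A" and B_lin: "linear B"
    and CQ: "\<exists>x0 y0. (x0, y0) \<in> rel_interior (edom p \<times> edom q) \<and>
                     adjoint A x0 + adjoint B y0 = c"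
    and Sf: "self_adjoint Sf" "psd Sf" and Shf: "self_adjoint Shf" "psd (\<lambda>u. Shf u - Sf u)"
    and Sg: "self_adjoint Sg" "psd Sg" and Shg: "self_adjoint Shg" "psd (\<lambda>u. Shg u - Sg u)"
    and f_maj: "\<And>u u'. f u' + (u - u') \<bullet> gf u' + qf Sf (u - u') / 2 \<le> f u"
               "\<And>u u'. f u \<le> f u' + (u - u') \<bullet> gf u' + qf Shf (u - u') / 2"
    and g_maj: "\<And>v v'. g v' + (v - v') \<bullet> gg v' + qf Sg (v - v') / 2 \<le> g v"
               "\<And>v v'. g v \<le> g v' + (v - v') \<bullet> gg v' + qf Shg (v - v') / 2"
    and sol: "\<exists>xs ys. adjoint A xs + adjoint B ys = c \<and>
               (\<forall>u v. adjoint A u + adjoint B v = c \<longrightarrow>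
                  p xs + ereal (f xs) + q ys + ereal (g ys) \<le> p u + ereal (f u) + q v + ereal (g v))"
    and \<sigma>: "\<sigma> > 0"
    and S: "self_adjoint S" and T: "self_adjoint T"
    and alg_x: "psd (\<lambda>u. Shf u + S u + \<sigma> *\<^sub>R A (adjoint A u))"
    and alg_y: "psd (\<lambda>v. Shg v + T v + \<sigma> *\<^sub>R B (adjoint B v))"
    and init: "x 0 \<in> edom p" "y 0 \<in> edom q"
    and x_step: "\<And>k u. p (x (Suc k)) + ereal (gf (x k) \<bullet> x (Suc k)
                        + qf (\<lambda>w. Shf w + S w) (x (Suc k) - x k) / 2
                        + z k \<bullet> adjoint A (x (Suc k))
                        + \<sigma> / 2 * (norm (adjoint A (x (Suc k)) + adjoint B (y k) - c))\<^sup>2)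
                   \<le> p u + ereal (gf (x k) \<bullet> u + qf (\<lambda>w. Shf w + S w) (u - x k) / 2
                        + z k \<bullet> adjoint A u
                        + \<sigma> / 2 * (norm (adjoint A u + adjoint B (y k) - c))\<^sup>2)"
    and y_step: "\<And>k v. q (y (Suc k)) + ereal (gg (y k) \<bullet> y (Suc k)
                        + qf (\<lambda>w. Shg w + T w) (y (Suc k) - y k) / 2
                        + z k \<bullet> adjoint B (y (Suc k))
                        + \<sigma> / 2 * (norm (adjoint A (x (Suc k)) + adjoint B (y (Suc k)) - c))\<^sup>2)
                   \<le> q v + ereal (gg (y k) \<bullet> v + qf (\<lambda>w. Shg w + T w) (v - y k) / 2
                        + z k \<bullet> adjoint B v
                        + \<sigma> / 2 * (norm (adjoint A (x (Suc k)) + adjoint B v - c))\<^sup>2)"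
    and z_step: "\<And>k. z (Suc k) = z k + (\<tau> * \<sigma>) *\<^sub>R
                        (adjoint A (x (Suc k)) + adjoint B (y (Suc k)) - c)"
    and \<tau>: "0 < \<tau>" "\<tau> < (1 + sqrt 5) / 2"
    and \<alpha>: "\<tau> / min (1 + \<tau>) (1 + 1 / \<tau>) < \<alpha>" "\<alpha> \<le> 1"
    and cond1: "psd (\<lambda>u. Shf u + S u)"
    and cond2: "pd (\<lambda>u. (1/2) *\<^sub>R Sf u + S u + ((1 - \<alpha>) * \<sigma> / 2) *\<^sub>R A (adjoint A u))"
    and cond3: "psd (\<lambda>v. (1/2) *\<^sub>R Shg v + T v)"
    and cond4: "pd (\<lambda>v. (1/2) *\<^sub>R Sg v + T v
                     + (min \<tau> (1 + \<tau> - \<tau>\<^sup>2) * \<alpha> * \<sigma>) *\<^sub>R B (adjoint B v))"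
  shows "((\<lambda>k. Min ((\<lambda>i. (infdist 0 ((\<lambda>v. v + gf (x (Suc i)) + A (z (Suc i))) ` subdiff p (x (Suc i))))\<^sup>2
                       + (infdist 0 ((\<lambda>w. w + gg (y (Suc i)) + B (z (Suc i))) ` subdiff q (y (Suc i))))\<^sup>2
                       + (norm (adjoint A (x (Suc i)) + adjoint B (y (Suc i)) - c))\<^sup>2) ` {1..k}))
           \<in> o(\<lambda>k. 1 / real k)) \<and>
    (\<forall>xb yb zb. 0 \<in> (\<lambda>v. v + gf xb + A zb) ` subdiff p xb \<and>
                    0 \<in> (\<lambda>w. w + gg yb + B zb) ` subdiff q yb \<and>
                    adjoint A xb + adjoint B yb = c \<longrightarrow>
           (\<lambda>k. Min ((\<lambda>i. \<bar>(real_of_ereal (p (x i)) + f (x i) + real_of_ereal (q (y i)) + g (y i))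
                             - (real_of_ereal (p xb) + f xb + real_of_ereal (q yb) + g yb)\<bar>) ` {1..k}))
           \<in> o(\<lambda>k. 1 / sqrt (real k)))"
proof -
  interpret ad: admm p q f g gf gg A B c Sf Shf S Sg Shg T \<sigma> \<tau> \<alpha> x y z
    by (rule admm.intro) (fact assms)+
  obtain xb0 yb0 zb0 where k0: "- (gf xb0 + A zb0) \<in> subdiff p xb0" "- (gg yb0 + B zb0) \<in> subdiff q yb0"
      "adjoint A xb0 + adjoint B yb0 = c"
    using ad.kkt_exists by blast
  interpret k0: admm_kkt p q f g gf gg A B c Sf Shf S Sg Shg T \<sigma> \<tau> \<alpha> x y z xb0 yb0 zb0
    by (unfold_locales) (fact k0)+
  show ?thesis
  proof (rule conjI[OF k0.part1], intro allI impI, goal_cases)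
    case (1 xb yb zb)
    obtain v where v: "v \<in> subdiff p xb" "0 = v + gf xb + A zb" using 1 by blast
    obtain w where w: "w \<in> subdiff q yb" "0 = w + gg yb + B zb" using 1 by blast
    have "v + (gf xb + A zb) = 0" using v(2) by (simp add: add.assoc)
    hence "v = - (gf xb + A zb)" by (simp only: eq_neg_iff_add_eq_0)
    hence kx: "- (gf xb + A zb) \<in> subdiff p xb" using v(1) by simp
    have "w + (gg yb + B zb) = 0" using w(2) by (simp add: add.assoc)
    hence "w = - (gg yb + B zb)" by (simp only: eq_neg_iff_add_eq_0)
    hence ky: "- (gg yb + B zb) \<in> subdiff q yb" using w(1) by simp
    have kf: "adjoint A xb + adjoint B yb = c" using 1 by blast
    interpret k1: admm_kkt p q f g gf gg A B c Sf Shf S Sg Shg T \<sigma> \<tau> \<alpha> x y z xb yb zb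
      by (unfold_locales) (fact kx ky kf)+
    show ?case by (rule k1.part2)
  qed
qed

end
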